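(* Let $n\le m$ and let $\mathcal C$ be an $(n,k)$ linear code over $\mathrm{GF}(q^m)$ with rank covering radius $\rho$. Then $k=n-\rho$ if any of the following holds: $\rho\in\{0,1,n-1,n\}$; or $\rho(n-\rho)\le m-\sigma(q)$; or $\mathcal C$ is a generalized Gabidulin code; or $\mathcal C$ is an elementary linear subspace.
   Context: The rank $\mathrm{rk}(\mathbf x)$ of $\mathbf x\in\mathrm{GF}(q^m)^n$ is the maximum number of its coordinates linearly independent over $\mathrm{GF}(q)$; $d_{\mathrm R}(\mathbf x,\mathbf y)=\mathrm{rk}(\mathbf x-\mathbf y)$; the rank covering radius of $C$ is $\max_{\mathbf x}\min_{\mathbf c\in C}d_{\mathrm R}(\mathbf x,\mathbf c)$. $\sigma(q)=\frac{1}{\ln q}\sum_{k=1}^\infty\frac{1}{k(q^k-1)}$. An elementary linear subspace is a $\mathrm{GF}(q^m)$-subspace of $\mathrm{GF}(q^m)^n$ that has a basis consisting of vectors in $\mathrm{GF}(q)^n$. A generalized Gabidulin code of dimension $k\le n$ is the code with generator matrix whose $(i,j)$ entry ($0\le i\le k-1$, $0\le j\le n-1$) is $g_j^{q^{ai}}$, where $g_0,\dots,g_{n-1}\in\mathrm{GF}(q^m)$ are linearly independent over $\mathrm{GF}(q)$ and $a$ is an integer coprime to $m$; it has minimum rank distance $n-k+1$. *)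

theory Defs
  imports Complex_Main
begin

text \<open>Setting: the ambient finite field 'a plays the role of GF(q^m); the set F is a
subfield of it with card F = q, i.e. GF(q). Vectors of GF(q^m)^n are functions
nat => 'a vanishing outside {..<n}.\<close>

definition subfield :: "'a::field set \<Rightarrow> bool" where
  "subfield F \<longleftrightarrow> 0 \<in> F \<and> 1 \<in> F \<and> (\<forall>x\<in>F. \<forall>y\<in>F. x + y \<in> F \<and> x * y \<in> F)
     \<and> (\<forall>x\<in>F. - x \<in> F) \<and> (\<forall>x\<in>F. x \<noteq> 0 \<longrightarrow> inverse x \<in> F)"

definition vecs :: "nat \<Rightarrow> (nat \<Rightarrow> 'a::zero) set" where
  "vecs n = {x. \<forall>i\<ge>n. x i = 0}"

definition coords_indep :: "'a::field set \<Rightarrow> (nat \<Rightarrow> 'a) \<Rightarrow> nat set \<Rightarrow> bool" where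
  "coords_indep F x S \<longleftrightarrow> (\<forall>c. (\<forall>i\<in>S. c i \<in> F) \<and> (\<Sum>i\<in>S. c i * x i) = 0 \<longrightarrow> (\<forall>i\<in>S. c i = 0))"

definition rk :: "'a::field set \<Rightarrow> nat \<Rightarrow> (nat \<Rightarrow> 'a) \<Rightarrow> nat" where
  "rk F n x = Max {card S | S. S \<subseteq> {..<n} \<and> coords_indep F x S}"

definition rank_dist :: "'a::field set \<Rightarrow> nat \<Rightarrow> (nat \<Rightarrow> 'a) \<Rightarrow> (nat \<Rightarrow> 'a) \<Rightarrow> nat" where
  "rank_dist F n x y = rk F n (\<lambda>j. x j - y j)"

definition rank_covering_radius :: "'a::{field,finite} set \<Rightarrow> nat \<Rightarrow> (nat \<Rightarrow> 'a) set \<Rightarrow> nat" where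
  "rank_covering_radius F n C = Max ((\<lambda>x. Min ((\<lambda>c. rank_dist F n x c) ` C)) ` vecs n)"

definition vec_indep :: "'a::field set \<Rightarrow> (nat \<Rightarrow> 'a) set \<Rightarrow> bool" where
  "vec_indep K B \<longleftrightarrow> (\<forall>c. (\<forall>b\<in>B. c b \<in> K) \<and> (\<forall>j. (\<Sum>b\<in>B. c b * b j) = 0) \<longrightarrow> (\<forall>b\<in>B. c b = 0))"

definition vec_span :: "(nat \<Rightarrow> 'a::field) set \<Rightarrow> (nat \<Rightarrow> 'a) set" where
  "vec_span B = {x. \<exists>c. x = (\<lambda>j. \<Sum>b\<in>B. c b * b j)}"

definition linear_code :: "nat \<Rightarrow> nat \<Rightarrow> (nat \<Rightarrow> 'a::field) set \<Rightarrow> bool" where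
  "linear_code n k C \<longleftrightarrow> (\<exists>B. finite B \<and> card B = k \<and> B \<subseteq> vecs n \<and> vec_indep UNIV B \<and> C = vec_span B)"

definition elementary_subspace :: "'a::field set \<Rightarrow> nat \<Rightarrow> (nat \<Rightarrow> 'a) set \<Rightarrow> bool" where
  "elementary_subspace F n C \<longleftrightarrow> (\<exists>B. finite B \<and> B \<subseteq> vecs n \<and> (\<forall>b\<in>B. \<forall>j. b j \<in> F)
       \<and> vec_indep UNIV B \<and> C = vec_span B)"

text \<open>Generalized Gabidulin code: row space of the k x n matrix (g_j^(q^(a i))),
 g_0..g_{n-1} linearly independent over F, gcd(a,m)=1. Since x^(q^m)=x in GF(q^m),
 the Frobenius power q^(a i) for an integer a i is taken as q^((a i) mod m).\<close>
definition gen_gabidulin :: "'a::field set \<Rightarrow> nat \<Rightarrow> nat \<Rightarrow> nat \<Rightarrow> (nat \<Rightarrow> 'a) set \<Rightarrow> bool" where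
  "gen_gabidulin F q m n C \<longleftrightarrow> (\<exists>k g a. k \<le> n \<and> coords_indep F g {..<n} \<and> coprime a (int m) \<and>
     C = {x. \<exists>u. x = (\<lambda>j. if j < n then (\<Sum>i<k. u i * g j ^ (q ^ nat ((a * int i) mod int m))) else 0)})"

definition sigma :: "nat \<Rightarrow> real" where
  "sigma q = (1 / ln (real q)) * (\<Sum>k. 1 / (real (Suc k) * (real q ^ Suc k - 1)))"

end

theory Submission
  imports Defs "HOL-Library.FuncSet" "HOL-Computational_Algebra.Polynomial" "HOL-Computational_Algebra.Primes"
    "HOL-Number_Theory.Cong" "HOL-Library.Function_Algebras"
begin


definition spanK :: "'a::field set \<Rightarrow> 'i set \<Rightarrow> ('i \<Rightarrow> 'a) \<Rightarrow> 'a set" where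
  "spanK K I y = {(\<Sum>i\<in>I. c i * y i) | c. \<forall>i\<in>I. c i \<in> K}"

definition ksub :: "'a::field set \<Rightarrow> 'a set \<Rightarrow> bool" where
  "ksub K V \<longleftrightarrow> 0 \<in> V \<and> (\<forall>x\<in>V. \<forall>y\<in>V. x + y \<in> V) \<and> (\<forall>c\<in>K. \<forall>x\<in>V. c * x \<in> V)"

lemma subfield_0: "subfield K \<Longrightarrow> 0 \<in> K" by (simp add: subfield_def)
lemma subfield_1: "subfield K \<Longrightarrow> 1 \<in> K" by (simp add: subfield_def)
lemma subfield_add: "subfield K \<Longrightarrow> x \<in> K \<Longrightarrow> y \<in> K \<Longrightarrow> x + y \<in> K" by (simp add: subfield_def)
lemma subfield_mult: "subfield K \<Longrightarrow> x \<in> K \<Longrightarrow> y \<in> K \<Longrightarrow> x * y \<in> K" by (simp add: subfield_def)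
lemma subfield_uminus: "subfield K \<Longrightarrow> x \<in> K \<Longrightarrow> - x \<in> K" by (simp add: subfield_def)
lemma subfield_diff: "subfield K \<Longrightarrow> x \<in> K \<Longrightarrow> y \<in> K \<Longrightarrow> x - y \<in> K"
  using subfield_add[of K x "- y"] subfield_uminus[of K y] by simp
lemma subfield_inverse: "subfield K \<Longrightarrow> x \<in> K \<Longrightarrow> inverse x \<in> K"
  by (cases "x = 0") (auto simp: subfield_def)
lemma subfield_divide: "subfield K \<Longrightarrow> x \<in> K \<Longrightarrow> y \<in> K \<Longrightarrow> x / y \<in> K"
  using subfield_mult[of K x "inverse y"] subfield_inverse[of K y] by (simp add: divide_inverse)

lemma subfield_sum: "subfield K \<Longrightarrow> (\<And>i. i \<in> I \<Longrightarrow> f i \<in> K) \<Longrightarrow> sum f I \<in> K"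
proof (induction I rule: infinite_finite_induct)
  case (infinite A) then show ?case by (simp add: subfield_0)
next
  case empty then show ?case by (simp add: subfield_0)
next
  case (insert x F) then show ?case by (simp add: subfield_add)
qed

lemma subfield_pow: "subfield K \<Longrightarrow> x \<in> K \<Longrightarrow> x ^ n \<in> K"
  by (induction n) (auto simp: subfield_1 subfield_mult)

lemma ksub_sum: "ksub K V \<Longrightarrow> (\<And>i. i \<in> I \<Longrightarrow> f i \<in> V) \<Longrightarrow> sum f I \<in> V"
proof (induction I rule: infinite_finite_induct)
  case (infinite A) then show ?case by (simp add: ksub_def)
next
  case empty then show ?case by (simp add: ksub_def)
next
  case (insert x F) then show ?case by (simp add: ksub_def)
qed

lemma ksub_span: assumes "subfield K" shows "ksub K (spanK K I y)"
  unfolding ksub_def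
proof (intro conjI ballI)
  show "0 \<in> spanK K I y" unfolding spanK_def
    by (rule CollectI, rule exI[of _ "\<lambda>_. 0"]) (simp add: subfield_0 assms)
next
  fix a b assume "a \<in> spanK K I y" "b \<in> spanK K I y"
  then obtain c d where c: "a = (\<Sum>i\<in>I. c i * y i)" "\<forall>i\<in>I. c i \<in> K"
     and d: "b = (\<Sum>i\<in>I. d i * y i)" "\<forall>i\<in>I. d i \<in> K" unfolding spanK_def by blast
  have "a + b = (\<Sum>i\<in>I. (c i + d i) * y i)" unfolding c d by (simp add: sum.distrib algebra_simps)
  moreover have "\<forall>i\<in>I. c i + d i \<in> K" using c d assms subfield_add by blast
  ultimately show "a + b \<in> spanK K I y" unfolding spanK_def by (intro CollectI exI[of _ "\<lambda>i. c i + d i"]) simp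
next
  fix e a assume e: "e \<in> K" and "a \<in> spanK K I y"
  then obtain c where c: "a = (\<Sum>i\<in>I. c i * y i)" "\<forall>i\<in>I. c i \<in> K" unfolding spanK_def by blast
  have "e * a = (\<Sum>i\<in>I. (e * c i) * y i)" unfolding c by (simp add: sum_distrib_left algebra_simps)
  moreover have "\<forall>i\<in>I. e * c i \<in> K" using c e assms subfield_mult by blast
  ultimately show "e * a \<in> spanK K I y" unfolding spanK_def by (intro CollectI exI[of _ "\<lambda>i. e * c i"]) simp
qed

lemma span_sub: assumes "ksub K V" "\<And>i. i \<in> I \<Longrightarrow> y i \<in> V" shows "spanK K I y \<subseteq> V"
proof
  fix a assume "a \<in> spanK K I y"
  then obtain c where c: "a = (\<Sum>i\<in>I. c i * y i)" "\<forall>i\<in>I. c i \<in> K" unfolding spanK_def by blast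
  show "a \<in> V" unfolding c(1)
    by (rule ksub_sum[OF assms(1)]) (use assms c in \<open>auto simp: ksub_def\<close>)
qed

lemma span_mem: assumes "subfield K" "j \<in> I" "finite I" shows "y j \<in> spanK K I y"
proof -
  have "(\<Sum>i\<in>I. (if i = j then 1 else 0) * y i) = (\<Sum>i\<in>I. if i = j then y i else 0)"
    by (rule sum.cong) auto
  then have "y j = (\<Sum>i\<in>I. (if i = j then 1 else 0) * y i)"
    using assms by (simp add: sum.delta)
  moreover have "\<forall>i\<in>I. (if i = j then 1 else 0) \<in> K" using assms by (simp add: subfield_0 subfield_1)
  ultimately show ?thesis unfolding spanK_def by (intro CollectI exI[of _ "\<lambda>i. if i = j then 1 else 0"]) simp
qed

lemma spanK_image: "spanK K I y = (\<lambda>c. \<Sum>i\<in>I. c i * y i) ` (I \<rightarrow>\<^sub>E K)"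
proof
  show "spanK K I y \<subseteq> (\<lambda>c. \<Sum>i\<in>I. c i * y i) ` (I \<rightarrow>\<^sub>E K)"
  proof
    fix a assume "a \<in> spanK K I y"
    then obtain c where c: "a = (\<Sum>i\<in>I. c i * y i)" "\<forall>i\<in>I. c i \<in> K" unfolding spanK_def by blast
    have "a = (\<Sum>i\<in>I. restrict c I i * y i)" unfolding c by simp
    moreover have "restrict c I \<in> I \<rightarrow>\<^sub>E K" using c by auto
    ultimately show "a \<in> (\<lambda>c. \<Sum>i\<in>I. c i * y i) ` (I \<rightarrow>\<^sub>E K)" by blast
  qed
qed (auto simp: spanK_def PiE_def Pi_def)

lemma card_span_le: assumes "finite K" "finite I" shows "card (spanK K I y) \<le> card K ^ card I"
proof -
  have "card (spanK K I y) \<le> card (I \<rightarrow>\<^sub>E K)" unfolding spanK_image by (rule card_image_le) (simp add: assms finite_PiE)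
  also have "\<dots> = card K ^ card I" by (simp add: card_PiE assms)
  finally show ?thesis .
qed

lemma finite_span: assumes "finite K" "finite I" shows "finite (spanK K I y)"
  unfolding spanK_image by (simp add: assms finite_PiE)

lemma card_span_indep: assumes "subfield K" "finite K" "finite I" "coords_indep K y I"
  shows "card (spanK K I y) = card K ^ card I"
proof -
  have "inj_on (\<lambda>c. \<Sum>i\<in>I. c i * y i) (I \<rightarrow>\<^sub>E K)"
  proof (rule inj_onI)
    fix c d assume c: "c \<in> I \<rightarrow>\<^sub>E K" and d: "d \<in> I \<rightarrow>\<^sub>E K"
      and eq: "(\<Sum>i\<in>I. c i * y i) = (\<Sum>i\<in>I. d i * y i)"
    have "(\<Sum>i\<in>I. (c i - d i) * y i) = 0" using eq by (simp add: algebra_simps sum_subtractf)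
    moreover have "\<forall>i\<in>I. c i - d i \<in> K" using c d assms(1) subfield_diff by blast
    ultimately have "\<forall>i\<in>I. c i - d i = 0" using assms(4)[unfolded coords_indep_def, rule_format, of "\<lambda>i. c i - d i"] by blast
    then show "c = d" using c d by (intro PiE_ext) auto
  qed
  then have "card (spanK K I y) = card (I \<rightarrow>\<^sub>E K)" unfolding spanK_image by (rule card_image)
  also have "\<dots> = card K ^ card I" by (simp add: card_PiE assms)
  finally show ?thesis .
qed

lemma coords_indep_cong: "(\<And>i. i \<in> I \<Longrightarrow> y i = z i) \<Longrightarrow> coords_indep K y I = coords_indep K z I"
  unfolding coords_indep_def by (metis (no_types, lifting) sum.cong)

lemma spanK_cong: "(\<And>i. i \<in> I \<Longrightarrow> y i = z i) \<Longrightarrow> spanK K I y = spanK K I z"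
  unfolding spanK_def by (metis (no_types, lifting) sum.cong)

lemma indep_subset: assumes "coords_indep K y I" "J \<subseteq> I" "finite I" "subfield K"
  shows "coords_indep K y J"
  unfolding coords_indep_def
proof (intro allI impI ballI)
  fix c j assume h: "(\<forall>i\<in>J. c i \<in> K) \<and> (\<Sum>i\<in>J. c i * y i) = 0" and j: "j \<in> J"
  let ?c = "\<lambda>i. if i \<in> J then c i else 0"
  have "(\<Sum>i\<in>I. ?c i * y i) = (\<Sum>i\<in>I. if i \<in> J then c i * y i else 0)"
    by (rule sum.cong) auto
  also have "\<dots> = (\<Sum>i\<in>J. c i * y i)"
    using assms(2,3) by (simp add: sum.inter_restrict[symmetric] Int_absorb1)
  finally have "(\<Sum>i\<in>I. ?c i * y i) = 0" using h by simp
  moreover have "\<forall>i\<in>I. ?c i \<in> K" using h assms(4) subfield_0 by auto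
  ultimately have "\<forall>i\<in>I. ?c i = 0" using assms(1)[unfolded coords_indep_def, rule_format, of ?c] by blast
  then show "c j = 0" using j assms(2) by (metis subsetD)
qed

lemma indep_extend: assumes K: "subfield K" and fin: "finite I" and j: "j \<notin> I"
  and ind: "coords_indep K y I" and nsp: "y j \<notin> spanK K I y"
  shows "coords_indep K y (insert j I)"
  unfolding coords_indep_def
proof (intro allI impI)
  fix c assume h: "(\<forall>i\<in>insert j I. c i \<in> K) \<and> (\<Sum>i\<in>insert j I. c i * y i) = 0"
  then have s: "c j * y j + (\<Sum>i\<in>I. c i * y i) = 0" using fin j by simp
  have cj: "c j = 0"
  proof (rule ccontr)
    assume nz: "c j \<noteq> 0"
    have "y j = (\<Sum>i\<in>I. (- c i / c j) * y i)"
    proof -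
      have "y j = - (\<Sum>i\<in>I. c i * y i) / c j" using s nz by (simp add: field_simps add_eq_0_iff)
      also have "\<dots> = (\<Sum>i\<in>I. (- c i / c j) * y i)"
        by (simp add: sum_divide_distrib sum_negf[symmetric])
      finally show ?thesis .
    qed
    moreover have "\<forall>i\<in>I. - c i / c j \<in> K" using h K by (auto intro!: subfield_divide subfield_uminus)
    ultimately have "y j \<in> spanK K I y" unfolding spanK_def by (intro CollectI exI[of _ "\<lambda>i. - c i / c j"]) simp
    with nsp show False by blast
  qed
  then have "(\<Sum>i\<in>I. c i * y i) = 0" using s by simp
  then have "\<forall>i\<in>I. c i = 0" using ind[unfolded coords_indep_def, rule_format, of c] h by blast
  then show "\<forall>i\<in>insert j I. c i = 0" using cj by blast
qed

lemma ksub_finite_basis: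
  assumes K: "subfield K" "finite K" and V: "ksub K V" "finite V"
  shows "\<exists>d y. (\<forall>i<d. y i \<in> V) \<and> coords_indep K y {..<d} \<and> spanK K {..<d} y = V"
proof -
  have K2: "card K \<ge> 2"
  proof -
    have "{0,1} \<subseteq> K" using K by (simp add: subfield_0 subfield_1)
    then have "card {0::'a,1} \<le> card K" using K(2) by (rule card_mono[rotated])
    then show ?thesis by simp
  qed
  define D where "D = {d. \<exists>y. (\<forall>i<d. y i \<in> V) \<and> coords_indep K y {..<d}}"
  have bound: "d \<le> card V" if dD: "d \<in> D" for d
  proof -
    obtain y where y: "\<forall>i<d. y i \<in> V" "coords_indep K y {..<d}" using dD D_def by blast
    have "card K ^ d = card (spanK K {..<d} y)" using card_span_indep[OF K _ y(2)] by simp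
    also have "\<dots> \<le> card V" by (rule card_mono[OF V(2) span_sub[OF V(1)]]) (use y in auto)
    finally have "card K ^ d \<le> card V" .
    moreover have "d < 2 ^ d" by (rule less_exp)
    moreover have "(2::nat) ^ d \<le> card K ^ d" using K2 by (rule power_mono) simp
    ultimately show ?thesis by linarith
  qed
  have "0 \<in> D" unfolding D_def coords_indep_def by auto
  define d where "d = Max D"
  have finD: "finite D" using bound by (meson finite_nat_set_iff_bounded_le)
  have "d \<in> D" unfolding d_def using finD \<open>0 \<in> D\<close> by (intro Max_in) auto
  then obtain y where y: "\<forall>i<d. y i \<in> V" "coords_indep K y {..<d}" using D_def by blast
  have "spanK K {..<d} y = V"
  proof (rule ccontr)
    assume "spanK K {..<d} y \<noteq> V"
    moreover have "spanK K {..<d} y \<subseteq> V" by (rule span_sub[OF V(1)]) (use y in auto)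
    ultimately obtain v where v: "v \<in> V" "v \<notin> spanK K {..<d} y" by blast
    define y' where "y' = y(d := v)"
    have eqs: "\<And>i. i \<in> {..<d} \<Longrightarrow> y' i = y i" unfolding y'_def by auto
    have "coords_indep K y' {..<d} = coords_indep K y {..<d}" by (rule coords_indep_cong) (simp add: y'_def)
    then have "coords_indep K y' {..<d}" using y(2) by simp
    moreover have "spanK K {..<d} y' = spanK K {..<d} y" by (rule spanK_cong) (simp add: y'_def)
    then have "y' d \<notin> spanK K {..<d} y'" using v unfolding y'_def by simp
    ultimately have "coords_indep K y' (insert d {..<d})" by (intro indep_extend K) auto
    moreover have "insert d {..<d} = {..<Suc d}" by auto
    moreover have "\<forall>i<Suc d. y' i \<in> V" using y v unfolding y'_def by auto
    ultimately have "Suc d \<in> D" unfolding D_def by auto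
    then have "Suc d \<le> d" unfolding d_def by (rule Max_ge[OF finD])
    then show False by simp
  qed
  then show ?thesis using y by blast
qed


lemma ff_power_card: fixes x :: "'a::{field,finite}" shows "x ^ card (UNIV :: 'a set) = x"
proof (cases "x = 0")
  case False
  have "x * (\<Prod>y\<in>UNIV-{0}. x * y) = x * x ^ (card (UNIV :: 'a set) - 1) * \<Prod>(UNIV-{0})"
    by (simp add: prod.distrib mult_ac)
  also have "x * x ^ (card (UNIV :: 'a set) - 1) = x ^ Suc (card (UNIV :: 'a set) - 1)"
    by (subst power_Suc) auto
  also have "Suc (card (UNIV :: 'a set) - 1) = card (UNIV :: 'a set)"
    using finite_UNIV_card_ge_0[where ?'a = 'a] by simp
  also have "(\<Prod>y\<in>UNIV-{0}. x * y) = (\<Prod>y\<in>UNIV-{0}. y)"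
    by (rule prod.reindex_bij_witness[of _ "\<lambda>y. y / x" "\<lambda>y. x * y"]) (use False in auto)
  finally show ?thesis
    by simp
qed (use finite_UNIV_card_ge_0[where ?'a = 'a] in auto)

lemma subfield_power_card: fixes x :: "'a::{field,finite}"
  assumes K: "subfield K" and x: "x \<in> K" shows "x ^ card K = x"
proof (cases "x = 0")
  case False
  have finK: "finite K" by simp
  have cK: "card K > 0" using K finK by (metis card_gt_0_iff empty_iff subfield_0)
  have "x * (\<Prod>y\<in>K-{0}. x * y) = x * x ^ (card K - 1) * \<Prod>(K-{0})"
    using K x by (simp add: prod.distrib mult_ac subfield_0)
  also have "x * x ^ (card K - 1) = x ^ Suc (card K - 1)"
    by (subst power_Suc) auto
  also have "Suc (card K - 1) = card K"
    using cK by simp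
  also have "(\<Prod>y\<in>K-{0}. x * y) = (\<Prod>y\<in>K-{0}. y)"
    by (rule prod.reindex_bij_witness[of _ "\<lambda>y. y / x" "\<lambda>y. x * y"])
       (use False K x in \<open>auto intro: subfield_mult subfield_divide\<close>)
  finally show ?thesis
    by simp
qed (use assms in \<open>auto simp: subfield_def card_gt_0_iff zero_power\<close>)

lemma card_roots_pow_le:
  fixes n :: nat assumes "n \<ge> 2"
  shows "card {x::'a::{field}. x ^ n = x} \<le> n"
proof -
  define P :: "'a poly" where "P = monom 1 n - [:0, 1:]"
  have ev: "poly P x = x ^ n - x" for x unfolding P_def by (simp add: poly_monom)
  have "coeff P n = 1" unfolding P_def using assms by (simp add: coeff_monom coeff_pCons split: nat.split)
  then have P0: "P \<noteq> 0" by auto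
  have "degree P \<le> max (degree (monom (1::'a) n)) (degree [:0::'a, 1:])" unfolding P_def by (rule degree_diff_le_max)
  also have "\<dots> \<le> n" using assms by (simp add: degree_monom_eq)
  finally have dP: "degree P \<le> n" .
  have "{x::'a. x ^ n = x} = {x. poly P x = 0}" by (auto simp: ev)
  then show ?thesis using card_poly_roots_bound[OF P0] dP by simp
qed

locale ffset =
  fixes F :: "'a::{field,finite} set" and q m :: nat
  assumes sf: "subfield F" and cardF: "card F = q" and cardU: "card (UNIV :: 'a set) = q ^ m"
begin

lemma q_ge2: "q \<ge> 2"
proof -
  have "{0,1} \<subseteq> F" using sf by (simp add: subfield_0 subfield_1)
  then have "card {0::'a,1} \<le> card F" by (rule card_mono[rotated]) simp
  then show ?thesis using cardF by simp
qed

lemma m_ge1: "m \<ge> 1"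
proof (rule ccontr)
  assume "\<not> m \<ge> 1" then have "m = 0" by simp
  then have "card (UNIV :: 'a set) = 1" using cardU by simp
  moreover have "card {0::'a,1} \<le> card (UNIV :: 'a set)" by (rule card_mono) auto
  ultimately show False by simp
qed

definition p where "p = CHAR('a)"

lemma p_prime: "prime p"
  unfolding p_def by (rule prime_CHAR_semidom, rule finite_imp_CHAR_pos) simp

definition E :: "'a set" where "E = {x. x ^ p = x}"

lemma q_pos: "q > 0" using q_ge2 by simp

lemma p_ge2: "p \<ge> 2" using p_prime prime_ge_2_nat by blast

lemma freshman_p: "(x + y :: 'a) ^ p = x ^ p + y ^ p"
  using freshmans_dream[of p x y] p_prime unfolding p_def by simp

lemma of_nat_in_E: "(of_nat i :: 'a) \<in> E"
proof (induction i)
  case 0 then show ?case using p_ge2 unfolding E_def by (simp add: zero_power)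
next
  case (Suc i) then show ?case unfolding E_def by (simp add: freshman_p)
qed

lemma E_eq: "E = of_nat ` {..<p}"
proof -
  have sub: "of_nat ` {..<p} \<subseteq> E" using of_nat_in_E by auto
  have inj: "inj_on (of_nat :: nat \<Rightarrow> 'a) {..<p}"
  proof (rule inj_onI)
    fix i j assume "i \<in> {..<p}" "j \<in> {..<p}" "(of_nat i :: 'a) = of_nat j"
    then show "i = j" using of_nat_eq_iff_cong_CHAR[where 'a='a, of i j] unfolding p_def[symmetric]
      by (simp add: cong_def)
  qed
  have "card (of_nat ` {..<p} :: 'a set) = p" using card_image[OF inj] by simp
  moreover have "card E \<le> p" unfolding E_def by (rule card_roots_pow_le[OF p_ge2])
  moreover have "card (of_nat ` {..<p} :: 'a set) \<le> card E" by (rule card_mono[OF _ sub]) simp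
  ultimately have "card (of_nat ` {..<p} :: 'a set) = card E" by simp
  then show ?thesis using sub by (intro card_subset_eq[symmetric]) auto
qed

lemma card_E: "card E = p"
proof -
  have inj: "inj_on (of_nat :: nat \<Rightarrow> 'a) {..<p}"
  proof (rule inj_onI)
    fix i j assume "i \<in> {..<p}" "j \<in> {..<p}" "(of_nat i :: 'a) = of_nat j"
    then show "i = j" using of_nat_eq_iff_cong_CHAR[where 'a='a, of i j] unfolding p_def[symmetric]
      by (simp add: cong_def)
  qed
  then show ?thesis unfolding E_eq by (simp add: card_image)
qed

lemma subfield_E: "subfield E"
  unfolding subfield_def E_def
proof (intro conjI ballI impI)
  show "(0::'a) \<in> {x. x ^ p = x}" using p_ge2 by (simp add: zero_power)
  show "(1::'a) \<in> {x. x ^ p = x}" by simp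
next
  fix x y :: 'a assume "x \<in> {x. x ^ p = x}" "y \<in> {x. x ^ p = x}"
  then show "x + y \<in> {x. x ^ p = x}" "x * y \<in> {x. x ^ p = x}"
    by (auto simp: freshman_p power_mult_distrib)
next
  fix x :: 'a assume "x \<in> {x. x ^ p = x}"
  then show "- x \<in> {x. x ^ p = x}" using minus_power_prime_CHAR[of p x] p_prime unfolding p_def by simp
next
  fix x :: 'a assume "x \<in> {x. x ^ p = x}"
  then show "inverse x \<in> {x. x ^ p = x}" by (simp add: power_inverse)
qed

lemma of_nat_in_F: "(of_nat i :: 'a) \<in> F"
  by (induction i) (auto simp: sf subfield_0 subfield_1 subfield_add)

lemma E_sub_F: "E \<subseteq> F" unfolding E_eq using of_nat_in_F by auto

lemma q_pow_p: "\<exists>d. q = p ^ d"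
proof -
  have "ksub E F" unfolding ksub_def using sf E_sub_F by (auto simp: subfield_0 subfield_add subfield_mult)
  then obtain d y where "(\<forall>i<d. y i \<in> F)" "coords_indep E y {..<d}" "spanK E {..<d} y = F"
    using ksub_finite_basis[OF subfield_E] by fastforce
  then have "card F = card E ^ d" using card_span_indep[OF subfield_E] by (metis card_lessThan finite_code finite_lessThan)
  then show ?thesis using cardF card_E by auto
qed

lemma frob_add: "(x + y :: 'a) ^ (q ^ s) = x ^ (q ^ s) + y ^ (q ^ s)"
proof -
  obtain d where "q = p ^ d" using q_pow_p by blast
  then have "q ^ s = CHAR('a) ^ (d * s)" unfolding p_def by (simp add: power_mult)
  then show ?thesis using freshmans_dream'[of "q ^ s" "d * s" x y] p_prime unfolding p_def by simp
qed

lemma frob_sum: "(sum f A :: 'a) ^ (q ^ s) = (\<Sum>i\<in>A. f i ^ (q ^ s))"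
  by (induction A rule: infinite_finite_induct) (auto simp: frob_add zero_power q_pos)

lemma frob_minus: "(- x :: 'a) ^ (q ^ s) = - (x ^ (q ^ s))"
proof -
  have "(- x + x) ^ (q ^ s) = (- x) ^ (q ^ s) + x ^ (q ^ s)" by (rule frob_add)
  then have "0 = (- x) ^ (q ^ s) + x ^ (q ^ s)" using q_ge2 by (simp add: zero_power)
  then show ?thesis by (simp add: eq_neg_iff_add_eq_0)
qed

lemma frob_diff: "(x - y :: 'a) ^ (q ^ s) = x ^ (q ^ s) - y ^ (q ^ s)"
  using frob_add[of x "- y" s] frob_minus[of y s] by simp

lemma F_fix: "c \<in> F \<Longrightarrow> c ^ q = c"
  using subfield_power_card[OF sf] cardF by blast

lemma F_fix_pow: "c \<in> F \<Longrightarrow> c ^ (q ^ s) = c"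
proof (induction s)
  case (Suc s) then show ?case by (simp add: power_mult F_fix)
qed simp

lemma F_eq: "F = {x. x ^ q = x}"
proof -
  have "F \<subseteq> {x. x ^ q = x}" using F_fix by auto
  moreover have "card {x::'a. x ^ q = x} \<le> q" by (rule card_roots_pow_le[OF q_ge2])
  moreover have "card F \<le> card {x::'a. x ^ q = x}" using calculation(1) by (rule card_mono[rotated]) simp
  ultimately have "card F = card {x::'a. x ^ q = x}" using cardF by simp
  then show ?thesis using \<open>F \<subseteq> {x. x ^ q = x}\<close> by (intro card_subset_eq) auto
qed

lemma U_fix: "(x :: 'a) ^ (q ^ m) = x"
  using ff_power_card[of x] cardU by simp

lemma U_fix_mult: "(x :: 'a) ^ (q ^ (m * t)) = x"
proof (induction t)
  case (Suc t)
  have "x ^ (q ^ (m * Suc t)) = x ^ (q ^ (m * t) * q ^ m)" by (simp add: power_add mult.commute)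
  also have "\<dots> = (x ^ (q ^ (m * t))) ^ (q ^ m)" by (rule power_mult)
  finally have "x ^ (q ^ (m * Suc t)) = (x ^ (q ^ (m * t))) ^ (q ^ m)" .
  then show ?case using Suc U_fix by simp
qed simp

lemma pow_mod: "(x :: 'a) ^ (q ^ s) = x ^ (q ^ (s mod m))"
proof -
  have "s = m * (s div m) + s mod m" by simp
  then have "x ^ (q ^ s) = (x ^ (q ^ (m * (s div m)))) ^ (q ^ (s mod m))"
    by (metis power_add power_mult)
  then show ?thesis using U_fix_mult by simp
qed

lemma fix_coprime:
  assumes cop: "coprime e m" and fx: "(x::'a) ^ (q ^ e) = x" shows "x \<in> F"
proof (cases "m = 1")
  case True
  then have "x ^ q = x" using U_fix[of x] by simp
  then show ?thesis using F_eq by auto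
next
  case False
  then have "e \<noteq> 0" using cop by (cases "e = 0") auto
  then obtain a b where ab: "e * a = m * b + gcd e m" using bezout_nat by blast
  then have ab1: "e * a = m * b + 1" using cop by simp
  have it: "x ^ (q ^ (e * t)) = x" for t
  proof (induction t)
    case (Suc t)
    have "x ^ (q ^ (e * Suc t)) = x ^ (q ^ (e * t) * q ^ e)" by (simp add: power_add mult.commute)
    also have "\<dots> = (x ^ (q ^ (e * t))) ^ (q ^ e)" by (rule power_mult)
    finally have "x ^ (q ^ (e * Suc t)) = (x ^ (q ^ (e * t))) ^ (q ^ e)" .
    then show ?case using Suc fx by simp
  qed simp
  have "x ^ (q ^ (e * a)) = x ^ (q ^ (m * b) * q)" unfolding ab1 by (simp add: power_add mult.commute)
  also have "\<dots> = (x ^ (q ^ (m * b))) ^ q" by (rule power_mult)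
  finally have "x ^ (q ^ (e * a)) = (x ^ (q ^ (m * b))) ^ q" .
  then have "x ^ q = x" using it[of a] U_fix_mult[of x b] by simp
  then show ?thesis using F_eq by auto
qed

end


lemma abel_sum:
  fixes a s :: "nat \<Rightarrow> 'a::comm_ring"
  shows "(\<Sum>j\<le>t. (\<Sum>i\<in>{j<..Suc t}. a i) * (s (Suc j) - s j))
       = (\<Sum>i\<le>Suc t. a i * s i) - (\<Sum>i\<le>Suc t. a i) * s 0"
proof (induction t)
  case 0
  have "{0<..Suc 0} = {Suc 0}" by auto
  then show ?case by (simp add: algebra_simps)
next
  case (Suc t)
  have split: "(\<Sum>i\<in>{j<..Suc (Suc t)}. a i) = (\<Sum>i\<in>{j<..Suc t}. a i) + a (Suc (Suc t))" if "j \<le> Suc t" for j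
  proof -
    have "{j<..Suc (Suc t)} = insert (Suc (Suc t)) {j<..Suc t}" using that by auto
    then show ?thesis by (simp add: add.commute)
  qed
  have tel: "(\<Sum>j\<le>t. (s (Suc j) - s j)) = s (Suc t) - s 0" for t
    by (induction t) (auto simp: algebra_simps)
  have "(\<Sum>j\<le>Suc t. (\<Sum>i\<in>{j<..Suc (Suc t)}. a i) * (s (Suc j) - s j))
      = (\<Sum>j\<le>Suc t. (\<Sum>i\<in>{j<..Suc t}. a i) * (s (Suc j) - s j) + a (Suc (Suc t)) * (s (Suc j) - s j))"
    by (rule sum.cong) (auto simp: split algebra_simps)
  also have "\<dots> = (\<Sum>j\<le>Suc t. (\<Sum>i\<in>{j<..Suc t}. a i) * (s (Suc j) - s j)) + a (Suc (Suc t)) * (s (Suc (Suc t)) - s 0)"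
    by (simp add: sum.distrib sum_distrib_left[symmetric] tel)
  also have "(\<Sum>j\<le>Suc t. (\<Sum>i\<in>{j<..Suc t}. a i) * (s (Suc j) - s j)) = (\<Sum>j\<le>t. (\<Sum>i\<in>{j<..Suc t}. a i) * (s (Suc j) - s j))"
    by simp
  finally show ?case using Suc by (simp add: algebra_simps)
qed

lemma fiber_card:
  fixes f :: "'a::{finite,ab_group_add} \<Rightarrow> 'b::ab_group_add"
  assumes add: "\<And>x y. f (x - y) = f x - f y" and fin: "finite A"
  shows "card {y. f y \<in> A} \<le> card A * card {y. f y = 0}"
proof -
  let ?I = "A \<inter> range f"
  have sub: "{y. f y \<in> A} \<subseteq> (\<Union>a\<in>?I. {y. f y = a})" by auto
  have each: "card {y. f y = a} \<le> card {y. f y = 0}" if aI: "a \<in> ?I" for a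
  proof -
    obtain y0 where y0: "a = f y0" using aI by auto
    have "{y. f y = a} \<subseteq> (\<lambda>z. y0 + z) ` {y. f y = 0}"
    proof
      fix y assume "y \<in> {y. f y = a}"
      then have "f (y - y0) = 0" using add y0 by simp
      then show "y \<in> (\<lambda>z. y0 + z) ` {y. f y = 0}" by (intro image_eqI[of _ _ "y - y0"]) auto
    qed
    then have "card {y. f y = a} \<le> card ((\<lambda>z. y0 + z) ` {y. f y = 0})" by (intro card_mono) auto
    also have "\<dots> \<le> card {y. f y = 0}" by (rule card_image_le) simp
    finally show ?thesis .
  qed
  have "card {y. f y \<in> A} \<le> card (\<Union>a\<in>?I. {y. f y = a})" by (rule card_mono[OF _ sub]) simp
  also have "\<dots> \<le> (\<Sum>a\<in>?I. card {y. f y = a})" by (rule card_UN_le) (use fin in simp)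
  also have "\<dots> \<le> (\<Sum>a\<in>?I. card {y. f y = 0})" by (rule sum_mono) (rule each)
  also have "\<dots> = card ?I * card {y. f y = 0}" by simp
  also have "\<dots> \<le> card A * card {y. f y = 0}" by (intro mult_right_mono card_mono fin) auto
  finally show ?thesis .
qed

locale gab = ffset F q m for F :: "'a::{field,finite} set" and q m +
  fixes e :: nat
  assumes cop: "coprime e m"
begin

definition sg :: "nat \<Rightarrow> 'a \<Rightarrow> 'a" where "sg i y = y ^ (q ^ (e * i))"

lemma sg_add: "sg i (x + y) = sg i x + sg i y" unfolding sg_def by (rule frob_add)
lemma sg_diff: "sg i (x - y) = sg i x - sg i y" unfolding sg_def by (rule frob_diff)
lemma sg_mult: "sg i (x * y) = sg i x * sg i y" unfolding sg_def by (simp add: power_mult_distrib)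
lemma sg_0: "sg 0 y = y" unfolding sg_def by simp
lemma sg_zero: "sg i 0 = 0" unfolding sg_def using q_pos by (simp add: zero_power)
lemma sg_nz: "y \<noteq> 0 \<Longrightarrow> sg i y \<noteq> 0" unfolding sg_def by simp
lemma sg_F: "c \<in> F \<Longrightarrow> sg i c = c" unfolding sg_def using F_fix_pow by simp
lemma sg_comp: "sg i (sg 1 y) = sg (Suc i) y"
proof -
  have "sg i (sg 1 y) = y ^ (q ^ e * q ^ (e * i))" unfolding sg_def by (simp add: power_mult)
  also have "\<dots> = sg (Suc i) y" unfolding sg_def by (simp add: power_add)
  finally show ?thesis .
qed
lemma sg_sum: "sg i (sum f A) = (\<Sum>x\<in>A. sg i (f x))" unfolding sg_def by (rule frob_sum)

definition ev :: "nat \<Rightarrow> (nat \<Rightarrow> 'a) \<Rightarrow> 'a \<Rightarrow> 'a" where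
  "ev t w y = (\<Sum>i\<le>t. w i * sg i y)"

lemma fix_sg1: "sg 1 y = y \<Longrightarrow> y \<in> F"
  using fix_coprime[OF cop, of y] unfolding sg_def by simp

lemma kernel_bound: "(\<exists>i\<le>t. w i \<noteq> 0) \<Longrightarrow> card {y. ev t w y = 0} \<le> q ^ t"
proof (induction t arbitrary: w)
  case 0
  then have w0: "w 0 \<noteq> 0" by simp
  have "{y. ev 0 w y = 0} = {0}" using w0 unfolding ev_def by (auto simp: sg_0)
  then show ?case by simp
next
  case (Suc t)
  show ?case
  proof (cases "{y. ev (Suc t) w y = 0} \<subseteq> {0}")
    case True
    then have "card {y. ev (Suc t) w y = 0} \<le> card {0::'a}" by (intro card_mono) auto
    also have "\<dots> \<le> q ^ Suc t" using q_pos by simp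
    finally show ?thesis .
  next
    case False
    then obtain v where v: "ev (Suc t) w v = 0" "v \<noteq> 0" by auto
    define wt where "wt i = w i * sg i v" for i
    define c where "c j = (\<Sum>i\<in>{j<..Suc t}. wt i)" for j
    define D where "D y = sg 1 y - y" for y
    have sumwt: "(\<Sum>i\<le>Suc t. wt i) = 0" using v(1) unfolding ev_def wt_def .
    have ident: "ev (Suc t) w (v * y) = ev t c (D y)" for y
    proof -
      have "ev t c (D y) = (\<Sum>j\<le>t. c j * (sg (Suc j) y - sg j y))"
        unfolding ev_def D_def by (simp add: sg_diff sg_comp sg_comp[simplified])
      also have "\<dots> = (\<Sum>i\<le>Suc t. wt i * sg i y) - (\<Sum>i\<le>Suc t. wt i) * sg 0 y"
        unfolding c_def by (rule abel_sum)
      also have "\<dots> = ev (Suc t) w (v * y)" using sumwt unfolding ev_def wt_def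
        by (simp add: sg_mult mult.assoc mult.left_commute)
      finally show ?thesis by simp
    qed
    have cnz: "\<exists>j\<le>t. c j \<noteq> 0"
    proof (rule ccontr)
      assume "\<not> (\<exists>j\<le>t. c j \<noteq> 0)"
      then have c0: "\<And>j. j \<le> t \<Longrightarrow> c j = 0" by auto
      have cS: "c (Suc t) = 0" unfolding c_def by simp
      have step: "c j = wt (Suc j) + c (Suc j)" if "j \<le> t" for j
      proof -
        have "{j<..Suc t} = insert (Suc j) {Suc j<..Suc t}" using that by auto
        then show ?thesis unfolding c_def by simp
      qed
      have wtS: "wt (Suc j) = 0" if jt: "j \<le> t" for j
      proof -
        have cSj: "c (Suc j) = 0"
        proof (cases "Suc j \<le> t")
          case True then show ?thesis by (rule c0)
        next
          case False then have "j = t" using jt by simp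
          then show ?thesis using cS by simp
        qed
        then show ?thesis using step[OF jt] c0[OF jt] by simp
      qed
      have "{..Suc t} = insert 0 {0<..Suc t}" by auto
      then have "(\<Sum>i\<le>Suc t. wt i) = wt 0 + c 0" unfolding c_def by simp
      then have wt0: "wt 0 = 0" using sumwt c0[of 0] by simp
      have "wt i = 0" if "i \<le> Suc t" for i
        using that wt0 wtS by (cases i) auto
      then have "w i = 0" if "i \<le> Suc t" for i
        using that v(2) sg_nz unfolding wt_def by fastforce
      then show False using Suc.prems by blast
    qed
    have kerD: "card {y. D y = 0} \<le> q"
    proof -
      have "{y. D y = 0} \<subseteq> F" using fix_sg1 unfolding D_def by auto
      then have "card {y. D y = 0} \<le> card F" by (intro card_mono) auto
      then show ?thesis using cardF by simp
    qed
    have Dadd: "D (x - y) = D x - D y" for x y unfolding D_def by (simp add: sg_diff)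
    have "{y. ev (Suc t) w y = 0} = (\<lambda>y. v * y) ` {y. D y \<in> {z. ev t c z = 0}}"
    proof
      show "{y. ev (Suc t) w y = 0} \<subseteq> (\<lambda>y. v * y) ` {y. D y \<in> {z. ev t c z = 0}}"
      proof
        fix y assume "y \<in> {y. ev (Suc t) w y = 0}"
        then have "ev (Suc t) w (v * (y / v)) = 0" using v(2) by simp
        then have "D (y / v) \<in> {z. ev t c z = 0}" using ident[of "y / v"] by (simp del: times_divide_eq_right)
        then show "y \<in> (\<lambda>y. v * y) ` {y. D y \<in> {z. ev t c z = 0}}"
          using v(2) by (intro image_eqI[of _ _ "y / v"]) auto
      qed
    next
      show "(\<lambda>y. v * y) ` {y. D y \<in> {z. ev t c z = 0}} \<subseteq> {y. ev (Suc t) w y = 0}"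
        using ident by auto
    qed
    then have "card {y. ev (Suc t) w y = 0} \<le> card {y. D y \<in> {z. ev t c z = 0}}"
      by (simp add: card_image_le)
    also have "\<dots> \<le> card {z. ev t c z = 0} * card {y. D y = 0}"
      by (rule fiber_card[OF Dadd]) simp
    also have "\<dots> \<le> q ^ t * q" using Suc.IH[OF cnz] kerD by (intro mult_mono) auto
    finally show ?thesis by (simp add: mult.commute)
  qed
qed

end


fun G :: "nat \<Rightarrow> nat \<Rightarrow> nat \<Rightarrow> nat" where
  "G q 0 r = (if r = 0 then 1 else 0)"
| "G q (Suc n) 0 = 1"
| "G q (Suc n) (Suc r) = G q n r + q ^ Suc r * G q n (Suc r)"

lemma G_gt: "r > n \<Longrightarrow> G q n r = 0"
proof (induction n arbitrary: r)
  case 0 then show ?case by simp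
next
  case (Suc n) then show ?case by (cases r) auto
qed

lemma G_0 [simp]: "G q n 0 = 1"
  by (cases n) auto

lemma G_diag: "G q n n = 1"
  by (induction n) (auto simp: G_gt)

definition RBall :: "'a::field set \<Rightarrow> nat \<Rightarrow> nat \<Rightarrow> (nat \<Rightarrow> 'a) set" where
  "RBall F n r = {x \<in> vecs n. rk F n x \<le> r}"

lemma finite_vecs: "finite (vecs n :: (nat \<Rightarrow> 'a::{finite,zero}) set)"
proof -
  have "vecs n \<subseteq> {x :: nat \<Rightarrow> 'a. \<forall>i. (i \<in> {..<n} \<longrightarrow> x i \<in> UNIV) \<and> (i \<notin> {..<n} \<longrightarrow> x i = 0)}" unfolding vecs_def by auto
  moreover have "finite {x :: nat \<Rightarrow> 'a. \<forall>i. (i \<in> {..<n} \<longrightarrow> x i \<in> UNIV) \<and> (i \<notin> {..<n} \<longrightarrow> x i = 0)}"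
    by (rule finite_set_of_finite_funs) auto
  ultimately show ?thesis by (rule finite_subset)
qed

lemma vecs_Suc: "vecs (Suc n) = (\<lambda>(y, a). y(n := a)) ` (vecs n \<times> UNIV)"
proof
  show "vecs (Suc n) \<subseteq> (\<lambda>(y, a). y(n := a)) ` (vecs n \<times> UNIV)"
  proof
    fix x assume x: "x \<in> vecs (Suc n)"
    have "x = (\<lambda>(y, a). y(n := a)) (x(n := 0), x n)" by simp
    moreover have "x(n := 0) \<in> vecs n" using x unfolding vecs_def by (auto simp: le_Suc_eq)
    ultimately show "x \<in> (\<lambda>(y, a). y(n := a)) ` (vecs n \<times> UNIV)" by blast
  qed
qed (auto simp: vecs_def)

lemma card_vecs: "card (vecs n :: (nat \<Rightarrow> 'a::{finite,zero}) set) = card (UNIV :: 'a set) ^ n"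
proof (induction n)
  case 0
  have "vecs 0 = {(\<lambda>_. 0) :: nat \<Rightarrow> 'a}" unfolding vecs_def by auto
  then show ?case by simp
next
  case (Suc n)
  have inj: "inj_on (\<lambda>(y, a). y(n := a)) (vecs n \<times> (UNIV :: 'a set))"
  proof (rule inj_onI, clarify)
    fix y a y' a' assume "y \<in> vecs n" "y' \<in> vecs n" and eq: "y(n := a) = y'(n := (a' :: 'a))"
    then have y0: "y n = 0" "y' n = 0" unfolding vecs_def by auto
    have "a = a'" using fun_cong[OF eq, of n] by simp
    moreover have "y = y'"
    proof (rule ext)
      fix i show "y i = y' i"
      proof (cases "i = n")
        case True then show ?thesis using y0 by simp
      next
        case False then show ?thesis using fun_cong[OF eq, of i] by simp
      qed
    qed
    ultimately show "y = y' \<and> a = a'" by simp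
  qed
  have "card (vecs (Suc n) :: (nat \<Rightarrow> 'a) set) = card ((vecs n :: (nat \<Rightarrow> 'a) set) \<times> (UNIV :: 'a set))"
    unfolding vecs_Suc using card_image[OF inj] by simp
  also have "\<dots> = card (UNIV :: 'a set) ^ Suc n" using Suc by (simp add: card_cartesian_product)
  finally show ?case .
qed

context ffset
begin

lemma rkset_finite: "finite {card S | S. S \<subseteq> {..<n} \<and> coords_indep F x S}"
proof -
  have "{card S | S. S \<subseteq> {..<n} \<and> coords_indep F x S} \<subseteq> card ` Pow {..<n}"
  proof
    fix k assume "k \<in> {card S | S. S \<subseteq> {..<n} \<and> coords_indep F x S}"
    then obtain S where "k = card S" "S \<subseteq> {..<n}" by blast
    then show "k \<in> card ` Pow {..<n}" by blast
  qed
  then show ?thesis by (rule finite_subset) simp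
qed

lemma rkset_0: "0 \<in> {card S | S. S \<subseteq> {..<n} \<and> coords_indep F x S}"
  by (rule CollectI, rule exI[of _ "{}"]) (simp add: coords_indep_def)

lemma rk_attain: "\<exists>S. S \<subseteq> {..<n} \<and> coords_indep F x S \<and> card S = rk F n x"
proof -
  let ?R = "{card S | S. S \<subseteq> {..<n} \<and> coords_indep F x S}"
  have ne: "?R \<noteq> {}" using rkset_0[of n x] by (simp only: ex_in_conv[symmetric]) blast
  have "Max ?R \<in> ?R" by (rule Max_in[OF rkset_finite ne])
  then obtain S where S: "S \<subseteq> {..<n}" "coords_indep F x S" "Max ?R = card S" by (simp only: mem_Collect_eq) blast
  have "rk F n x = Max ?R" by (simp only: rk_def)
  then show ?thesis using S by (intro exI[of _ S]) simp
qed

lemma rk_ge: assumes "S \<subseteq> {..<n}" "coords_indep F x S" shows "card S \<le> rk F n x"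
  unfolding rk_def by (rule Max_ge[OF rkset_finite]) (rule CollectI, rule exI[of _ S], use assms in blast)

lemma rk_le_n: "rk F n x \<le> n"
proof -
  obtain S where "S \<subseteq> {..<n}" "card S = rk F n x" using rk_attain by blast
  then have "card S \<le> card {..<n}" using card_mono[of "{..<n}" S] by simp
  then show ?thesis using \<open>card S = rk F n x\<close> by simp
qed

lemma rk_cong: assumes h: "\<And>j. j < n \<Longrightarrow> x j = y j" shows "rk F n x = rk F n y"
proof -
  have eqv: "coords_indep F x S = coords_indep F y S" if "S \<subseteq> {..<n}" for S
    by (rule coords_indep_cong) (use h that in blast)
  show ?thesis unfolding rk_def
    by (rule arg_cong[where f=Max], rule Collect_cong) (use eqv in blast)
qed

lemma rk_mono_n: "rk F n x \<le> rk F (Suc n) x"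
proof -
  obtain S where "S \<subseteq> {..<n}" "coords_indep F x S" "card S = rk F n x" using rk_attain by blast
  moreover have "S \<subseteq> {..<Suc n}" using calculation(1) by auto
  ultimately show ?thesis using rk_ge[of S "Suc n" x] by auto
qed

lemma rk_max_span:
  assumes S: "S \<subseteq> {..<n}" "coords_indep F x S" "card S = rk F n x" and j: "j < n"
  shows "x j \<in> spanK F S x"
proof (cases "j \<in> S")
  case True then show ?thesis using S by (intro span_mem sf) (auto intro: finite_subset)
next
  case False
  show ?thesis
  proof (rule ccontr)
    assume "x j \<notin> spanK F S x"
    then have "coords_indep F x (insert j S)" using S False
      by (intro indep_extend sf) (auto intro: finite_subset)
    then have "card (insert j S) \<le> rk F n x" using S j by (intro rk_ge) auto
    moreover have "card (insert j S) = Suc (card S)" using False S by (simp add: finite_subset)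
    ultimately show False using S by simp
  qed
qed

lemma rk_upper:
  assumes V: "ksub F V" and xV: "\<And>j. j < n \<Longrightarrow> x j \<in> V" and cV: "card V \<le> q ^ t"
  shows "rk F n x \<le> t"
proof -
  obtain S where S: "S \<subseteq> {..<n}" "coords_indep F x S" "card S = rk F n x" using rk_attain by blast
  have finS: "finite S" using S(1) finite_subset by blast
  have c1: "card (spanK F S x) = card F ^ card S" by (rule card_span_indep[OF sf _ finS S(2)]) simp
  have sub: "spanK F S x \<subseteq> V" by (rule span_sub[OF V]) (use S(1) xV in blast)
  have "card (spanK F S x) \<le> card V" by (rule card_mono[OF _ sub]) simp
  then have "card F ^ card S \<le> card V" using c1 by linarith
  then have "q ^ card S \<le> card V" unfolding cardF .
  then have "q ^ card S \<le> q ^ t" using cV by (rule order_trans)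
  moreover have "1 < q" using q_ge2 by linarith
  ultimately have "card S \<le> t" using power_le_imp_le_exp by blast
  then show ?thesis using S(3) by linarith
qed

lemma rk_support:
  assumes T: "T \<subseteq> {..<n}" and z: "\<And>j. j < n \<Longrightarrow> j \<notin> T \<Longrightarrow> x j = 0"
  shows "rk F n x \<le> card T"
proof (rule rk_upper[OF ksub_span[OF sf]])
  have finT: "finite T" using T finite_subset by blast
  show "x j \<in> spanK F T x" if "j < n" for j
  proof (cases "j \<in> T")
    case True then show ?thesis by (intro span_mem sf finT)
  next
    case False then have "x j = 0" using z that by simp
    then show ?thesis using ksub_span[OF sf, of T x] unfolding ksub_def by simp
  qed
  have "card (spanK F T x) \<le> card F ^ card T" by (rule card_span_le[OF _ finT]) simp
  then show "card (spanK F T x) \<le> q ^ card T" unfolding cardF .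
qed

lemma rk_zero: assumes "rk F n x = 0" "j < n" shows "x j = 0"
proof (rule ccontr)
  assume nz: "x j \<noteq> 0"
  have "coords_indep F x {j}" unfolding coords_indep_def using nz by auto
  then have "card {j} \<le> rk F n x" using assms by (intro rk_ge) auto
  then show False using assms by simp
qed

definition Sy :: "nat \<Rightarrow> (nat \<Rightarrow> 'a) \<Rightarrow> nat set" where
  "Sy n y = (SOME S. S \<subseteq> {..<n} \<and> coords_indep F y S \<and> card S = rk F n y)"

lemma Sy: "Sy n y \<subseteq> {..<n} \<and> coords_indep F y (Sy n y) \<and> card (Sy n y) = rk F n y"
  unfolding Sy_def by (rule someI_ex) (rule rk_attain)

lemma ball_rec:
  "card (RBall F (Suc n) r) \<le> (if r > 0 then q ^ m * card (RBall F n (r - 1)) else 0) + q ^ r * card (RBall F n r)"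
proof -
  define A1 where "A1 = (if r > 0 then (\<lambda>(y, a). y(n := a)) ` (RBall F n (r - 1) \<times> (UNIV :: 'a set)) else {})"
  define A2 where "A2 = (\<Union>y\<in>RBall F n r. (\<lambda>a. y(n := a)) ` spanK F (Sy n y) y)"
  have sub: "RBall F (Suc n) r \<subseteq> A1 \<union> A2"
  proof
    fix x assume x: "x \<in> RBall F (Suc n) r"
    define y where "y = x(n := 0)"
    have yv: "y \<in> vecs n" using x unfolding y_def RBall_def vecs_def by (auto simp: le_Suc_eq)
    have ry: "rk F n y = rk F n x" unfolding y_def by (rule rk_cong) simp
    have rx: "rk F (Suc n) x \<le> r" using x unfolding RBall_def by simp
    have xe: "x = y(n := x n)" unfolding y_def by simp
    show "x \<in> A1 \<union> A2"
    proof (cases "rk F n y < r")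
      case True
      then have "y \<in> RBall F n (r - 1)" using yv unfolding RBall_def by simp
      then have "x \<in> A1" unfolding A1_def using True xe by (auto intro!: image_eqI[of _ _ "(y, x n)"])
      then show ?thesis by simp
    next
      case False
      then have req: "rk F n y = r" using ry rk_mono_n[of n x] rx by simp
      let ?S = "Sy n y"
      have S: "?S \<subseteq> {..<n}" "coords_indep F y ?S" "card ?S = rk F n y" using Sy by auto
      have finS: "finite ?S" using S by (auto intro: finite_subset)
      have eqS: "\<And>i. i \<in> ?S \<Longrightarrow> x i = y i" using S unfolding y_def by auto
      have "x n \<in> spanK F ?S y"
      proof (rule ccontr)
        assume ns: "x n \<notin> spanK F ?S y"
        have "coords_indep F x ?S" using S(2) coords_indep_cong[of ?S x y F] eqS by simp
        moreover have "x n \<notin> spanK F ?S x" using ns spanK_cong[of ?S x y F] eqS by simp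
        moreover have "n \<notin> ?S" using S by auto
        ultimately have "coords_indep F x (insert n ?S)" by (intro indep_extend sf finS)
        then have "card (insert n ?S) \<le> rk F (Suc n) x" using S by (intro rk_ge) auto
        moreover have "card (insert n ?S) = Suc r" using S finS req \<open>n \<notin> ?S\<close> by simp
        ultimately show False using rx by simp
      qed
      moreover have "y \<in> RBall F n r" using yv req unfolding RBall_def by simp
      ultimately have "x \<in> A2" unfolding A2_def using xe by blast
      then show ?thesis by simp
    qed
  qed
  have finB: "finite (RBall F n r')" for r' unfolding RBall_def by (rule finite_subset[OF _ finite_vecs[of n]]) blast
  have c1: "card A1 \<le> (if r > 0 then q ^ m * card (RBall F n (r - 1)) else 0)"
  proof (cases "r > 0")
    case True
    from True have "A1 = (\<lambda>(y, a). y(n := a)) ` (RBall F n (r - 1) \<times> (UNIV :: 'a set))" unfolding A1_def by simp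
    then have "card A1 \<le> card (RBall F n (r - 1) \<times> (UNIV :: 'a set))"
      by (simp only:) (rule card_image_le, simp add: finB)
    also have "\<dots> = q ^ m * card (RBall F n (r - 1))" using cardU by (simp add: card_cartesian_product)
    finally show ?thesis using True by simp
  qed (simp add: A1_def)
  have c2: "card A2 \<le> q ^ r * card (RBall F n r)"
  proof -
    have "card A2 \<le> (\<Sum>y\<in>RBall F n r. card ((\<lambda>a. y(n := a)) ` spanK F (Sy n y) y))"
      unfolding A2_def by (rule card_UN_le) (rule finB)
    also have "\<dots> \<le> (\<Sum>y\<in>RBall F n r. q ^ r)"
    proof (rule sum_mono)
      fix y assume y: "y \<in> RBall F n r"
      have S: "Sy n y \<subseteq> {..<n}" "card (Sy n y) = rk F n y" using Sy by auto
      have "card ((\<lambda>a. y(n := a)) ` spanK F (Sy n y) y) \<le> card (spanK F (Sy n y) y)" by (rule card_image_le) simp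
      also have "\<dots> \<le> card F ^ card (Sy n y)" by (rule card_span_le) (use S in \<open>auto intro: finite_subset\<close>)
      also have "\<dots> \<le> q ^ r" using S y q_pos cardF unfolding RBall_def by (simp add: power_increasing)
      finally show "card ((\<lambda>a. y(n := a)) ` spanK F (Sy n y) y) \<le> q ^ r" .
    qed
    also have "\<dots> = q ^ r * card (RBall F n r)" by simp
    finally show ?thesis .
  qed
  have fA1: "finite A1" unfolding A1_def using finB by simp
  have fA2: "finite A2" unfolding A2_def
  proof (rule finite_UN_I[OF finB])
    fix y assume "y \<in> RBall F n r"
    have "finite (Sy n y)" using Sy[of n y] by (meson finite_lessThan finite_subset)
    then show "finite ((\<lambda>a. y(n := a)) ` spanK F (Sy n y) y)" by (intro finite_imageI finite_span) simp_all
  qed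
  have "card (RBall F (Suc n) r) \<le> card (A1 \<union> A2)" by (rule card_mono[OF _ sub]) (use fA1 fA2 in simp)
  also have "\<dots> \<le> card A1 + card A2" by (rule card_Un_le)
  finally show ?thesis using c1 c2 by linarith
qed

lemma ball_bound: "r \<le> n \<Longrightarrow> card (RBall F n r) \<le> (q ^ m) ^ r * G q n r"
proof (induction n arbitrary: r)
  case 0
  then have "RBall F 0 r \<subseteq> vecs 0" unfolding RBall_def by auto
  then have "card (RBall F 0 r) \<le> card (vecs 0 :: (nat \<Rightarrow> 'a) set)" by (intro card_mono finite_vecs)
  then show ?case using 0 card_vecs[where 'a='a, of 0] by simp
next
  case (Suc n)
  show ?case
  proof (cases "r = Suc n")
    case True
    have "RBall F (Suc n) r \<subseteq> vecs (Suc n)" unfolding RBall_def by auto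
    then have "card (RBall F (Suc n) r) \<le> card (vecs (Suc n) :: (nat \<Rightarrow> 'a) set)" by (intro card_mono finite_vecs)
    then show ?thesis using True card_vecs[where 'a='a, of "Suc n"] cardU by (simp add: G_diag)
  next
    case False
    then have rn: "r \<le> n" using Suc by simp
    show ?thesis
    proof (cases r)
      case 0
      then show ?thesis using ball_rec[of n 0] Suc.IH[of 0] by simp
    next
      case (Suc r')
      have "card (RBall F (Suc n) r) \<le> q ^ m * card (RBall F n r') + q ^ r * card (RBall F n r)"
        using ball_rec[of n r] Suc by simp
      also have "\<dots> \<le> q ^ m * ((q ^ m) ^ r' * G q n r') + q ^ r * ((q ^ m) ^ r * G q n r)"
        using Suc.IH[of r'] Suc.IH[of r] rn Suc by (intro add_mono mult_left_mono) auto
      also have "\<dots> = (q ^ m) ^ r * G q (Suc n) r" using Suc by (simp add: algebra_simps)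
      finally show ?thesis .
    qed
  qed
qed

end


lemma G1: assumes "q \<ge> 2" shows "G q n (Suc 0) < q ^ n"
proof (induction n)
  case 0 then show ?case by simp
next
  case (Suc n)
  have "Suc (G q n (Suc 0)) \<le> q ^ n" using Suc by simp
  then have "q * Suc (G q n (Suc 0)) \<le> q * q ^ n" by (rule mult_le_mono2)
  then show ?case using assms by simp
qed

lemma Gsub: assumes "q \<ge> 2" shows "G q (Suc n) n < q ^ Suc n"
proof (induction n)
  case 0 then show ?case using assms by simp
next
  case (Suc n)
  have "G q (Suc (Suc n)) (Suc n) = G q (Suc n) n + q ^ Suc n" by (simp add: G_diag)
  also have "\<dots> < q ^ Suc n + q ^ Suc n" using Suc by simp
  also have "\<dots> = 2 * q ^ Suc n" by simp
  also have "\<dots> \<le> q * q ^ Suc n" by (rule mult_right_mono) (use assms in auto)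
  finally show ?case by simp
qed

lemma G_closed:
  "real (G q n r) * (\<Prod>i<r. (real q ^ Suc i - 1)) = (\<Prod>i<r. (real q ^ (n - i) - 1))"
proof (induction n arbitrary: r)
  case 0
  show ?case
  proof (cases r)
    case 0 then show ?thesis by simp
  next
    case (Suc r')
    have "(\<Prod>i<r. (real q ^ (0 - i) - 1)) = 0" unfolding Suc
      by (rule prod_zero) auto
    then show ?thesis using Suc by simp
  qed
next
  case (Suc n)
  show ?case
  proof (cases r)
    case 0 then show ?thesis by simp
  next
    case (Suc r)
    define Dn where "Dn r = (\<Prod>i<r. (real q ^ Suc i - 1))" for r
    define Nn where "Nn n r = (\<Prod>i<r. (real q ^ (n - i) - 1))" for n r
    have D1: "Dn (Suc r) = Dn r * (real q ^ Suc r - 1)" unfolding Dn_def by simp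
    have N1: "Nn n (Suc r) = Nn n r * (real q ^ (n - r) - 1)" unfolding Nn_def by simp
    have N2: "Nn (Suc n) (Suc r) = (real q ^ Suc n - 1) * Nn n r" unfolding Nn_def
      by (subst prod.lessThan_Suc_shift) simp
    have IH1: "real (G q n r) * Dn r = Nn n r" using Suc.IH unfolding Dn_def Nn_def by blast
    have IH2: "real (G q n (Suc r)) * Dn (Suc r) = Nn n (Suc r)" using Suc.IH unfolding Dn_def Nn_def by blast
    have "real (G q (Suc n) (Suc r)) * Dn (Suc r)
        = real (G q n r) * Dn r * (real q ^ Suc r - 1) + real q ^ Suc r * (real (G q n (Suc r)) * Dn (Suc r))"
      by (simp add: D1 algebra_simps)
    also have "\<dots> = Nn n r * (real q ^ Suc r - 1) + real q ^ Suc r * (Nn n r * (real q ^ (n - r) - 1))"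
      using IH1 IH2 N1 by simp
    also have "\<dots> = (real q ^ Suc n - 1) * Nn n r"
    proof (cases "r \<le> n")
      case True
      have "real q ^ Suc r * real q ^ (n - r) = real q ^ Suc n"
        using True by (simp flip: power_add)
      have "Nn n r * (real q ^ Suc r - 1) + real q ^ Suc r * (Nn n r * (real q ^ (n - r) - 1))
          = Nn n r * (real q ^ Suc r * real q ^ (n - r) - 1)" by (simp add: algebra_simps)
      then show ?thesis using \<open>real q ^ Suc r * real q ^ (n - r) = real q ^ Suc n\<close> by (simp add: mult.commute)
    next
      case False
      have "Nn n r = 0" unfolding Nn_def by (rule prod_zero) (use False in \<open>auto intro!: bexI[of _ n]\<close>)
      then show ?thesis by simp
    qed
    also have "\<dots> = Nn (Suc n) (Suc r)" using N2 by simp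
    finally show ?thesis unfolding Dn_def Nn_def Suc .
  qed
qed

lemma prod_pow_split:
  fixes x :: real
  shows "r \<le> n \<Longrightarrow> (\<Prod>i<r. x ^ (n - i)) = x ^ (r * (n - r)) * (\<Prod>i<r. x ^ Suc i)"
proof (induction r)
  case 0 then show ?case by simp
next
  case (Suc r)
  then obtain k where n: "n = r + 1 + k" by (metis Suc_eq_plus1 le_iff_add)
  have "(\<Prod>i<Suc r. x ^ (n - i)) = x ^ (r * (n - r)) * (\<Prod>i<r. x ^ Suc i) * x ^ (n - r)"
    using Suc by simp
  also have "\<dots> = x ^ (r * (n - r) + (n - r)) * (\<Prod>i<r. x ^ Suc i)" by (simp add: power_add)
  also have "r * (n - r) + (n - r) = Suc r * (n - Suc r) + Suc r" unfolding n by (simp add: algebra_simps)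
  also have "x ^ (Suc r * (n - Suc r) + Suc r) * (\<Prod>i<r. x ^ Suc i) = x ^ (Suc r * (n - Suc r)) * (\<Prod>i<Suc r. x ^ Suc i)"
    by (simp add: power_add)
  finally show ?case .
qed

lemma G_bound:
  assumes q: "q \<ge> 2" and rn: "r \<le> n"
  shows "real (G q n r) \<le> real q ^ (r * (n - r)) * (\<Prod>i<r. real q ^ Suc i / (real q ^ Suc i - 1))"
proof -
  have qr: "real q \<ge> 2" using q by simp
  have pos: "real q ^ Suc i - 1 > 0" for i
  proof -
    have "real q ^ 1 \<le> real q ^ Suc i" using qr by (intro power_increasing) auto
    then have "real q \<le> real q ^ Suc i" by simp
    then show ?thesis using qr by linarith
  qed
  have Dpos: "(\<Prod>i<r. (real q ^ Suc i - 1)) > 0" using pos by (simp add: prod_pos)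
  have "real (G q n r) = (\<Prod>i<r. (real q ^ (n - i) - 1)) / (\<Prod>i<r. (real q ^ Suc i - 1))"
  proof -
    have "real (G q n r) = real (G q n r) * (\<Prod>i<r. (real q ^ Suc i - 1)) / (\<Prod>i<r. (real q ^ Suc i - 1))"
      using Dpos by (simp only: nonzero_mult_div_cancel_right less_irrefl)
    then show ?thesis unfolding G_closed .
  qed
  also have "\<dots> \<le> (\<Prod>i<r. real q ^ (n - i)) / (\<Prod>i<r. (real q ^ Suc i - 1))"
  proof (intro divide_right_mono prod_mono conjI)
    fix i assume "i \<in> {..<r}"
    then have "n - i \<ge> 1" using rn by simp
    then have "real q ^ (n - i) \<ge> real q ^ 1" using qr by (intro power_increasing) auto
    then show "0 \<le> real q ^ (n - i) - 1" using qr by simp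
    show "real q ^ (n - i) - 1 \<le> real q ^ (n - i)" by simp
  qed (use Dpos in simp)
  also have "\<dots> = real q ^ (r * (n - r)) * ((\<Prod>i<r. real q ^ Suc i) / (\<Prod>i<r. (real q ^ Suc i - 1)))"
    using prod_pow_split[OF rn, of "real q"] by simp
  also have "(\<Prod>i<r. real q ^ Suc i) / (\<Prod>i<r. (real q ^ Suc i - 1)) = (\<Prod>i<r. real q ^ Suc i / (real q ^ Suc i - 1))"
    by (simp add: prod_dividef)
  finally show ?thesis .
qed

lemma neg_ln_series:
  fixes y :: real assumes y: "0 \<le> y" "y < 1"
  shows "(\<lambda>k. y ^ Suc k / real (Suc k)) sums (- ln (1 - y))"
proof -
  have sg: "summable (\<lambda>k. y * y ^ k)" using y by (intro summable_mult summable_geometric) simp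
  have sm: "summable (\<lambda>k. y ^ Suc k / real (Suc k))"
  proof (rule summable_comparison_test'[OF sg])
    fix k :: nat
    have "0 \<le> y ^ Suc k" using y by simp
    then have "y ^ Suc k / real (Suc k) \<le> y ^ Suc k / 1" by (intro divide_left_mono) auto
    then have "y ^ Suc k / real (Suc k) \<le> y ^ Suc k" by simp
    then show "norm (y ^ Suc k / real (Suc k)) \<le> y * y ^ k" using y by simp
  qed
  have "ln (1 - y) = (\<Sum>n. (-1)^n * (1 / real (n + 1)) * ((1 - y) - 1)^(Suc n))"
    using y by (intro ln_series) auto
  also have "(\<lambda>n. (-1)^n * (1 / real (n + 1)) * ((1 - y) - 1)^(Suc n)) = (\<lambda>n. - (y ^ Suc n / real (Suc n)))"
  proof
    fix n
    have C: "(-1::real)^n * (-y)^n = y^n" by (simp add: power_mult_distrib[symmetric])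
    have "(-1)^n * (1 / real (n + 1)) * ((1 - y) - 1)^(Suc n) = (-1)^n * (1 / real (n + 1)) * ((-y) * (-y)^n)"
      by simp
    also have "\<dots> = - (y * ((-1)^n * (-y)^n)) / real (n + 1)" by (simp add: algebra_simps)
    also have "\<dots> = - (y ^ Suc n / real (Suc n))" unfolding C by simp
    finally show "(-1)^n * (1 / real (n + 1)) * ((1 - y) - 1)^(Suc n) = - (y ^ Suc n / real (Suc n))" .
  qed
  also have "(\<Sum>n. - (y ^ Suc n / real (Suc n))) = - (\<Sum>n. y ^ Suc n / real (Suc n))"
    by (rule suminf_minus[OF sm])
  finally have "(\<Sum>n. y ^ Suc n / real (Suc n)) = - ln (1 - y)" by simp
  then show ?thesis using summable_sums[OF sm] by simp
qed

lemma prod_lt_exp: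
  assumes q: "q \<ge> 2"
  shows "(\<Prod>i<r. real q ^ Suc i / (real q ^ Suc i - 1)) < exp (\<Sum>k. 1 / (real (Suc k) * (real q ^ Suc k - 1)))"
proof -
  have qr: "real q \<ge> 2" using q by simp
  have qpow: "real q ^ Suc i \<ge> 2 * 2 ^ i" for i
  proof -
    have "(2::real) ^ Suc i \<le> real q ^ Suc i" using qr by (intro power_mono) auto
    then show ?thesis by simp
  qed
  define y where "y i = 1 / real q ^ Suc i" for i
  have y01: "0 < y i" "y i < 1" for i
  proof -
    show "0 < y i" unfolding y_def using qr by simp
    have "2 \<le> real q ^ Suc i" using qpow[of i] by (smt (verit) one_le_power)
    then show "y i < 1" unfolding y_def by simp
  qed
  define t where "t i k = y i ^ Suc k / real (Suc k)" for i k
  have tsums: "t i sums (- ln (1 - y i))" for i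
    unfolding t_def by (rule neg_ln_series) (use y01[of i] in auto)
  have fac: "real q ^ Suc i / (real q ^ Suc i - 1) = 1 / (1 - y i)" for i
  proof -
    have "real q ^ Suc i > 1" using qpow[of i] by (smt (verit) one_le_power)
    then show ?thesis unfolding y_def using q by (simp add: field_simps)
  qed
  have facpos: "0 < real q ^ Suc i / (real q ^ Suc i - 1)" for i using fac y01[of i] by simp
  have lnfac: "ln (real q ^ Suc i / (real q ^ Suc i - 1)) = - ln (1 - y i)" for i
    unfolding fac using y01[of i] by (simp add: ln_div)
  define f where "f k = (\<Sum>i<r. t i k)" for k
  define g where "g k = 1 / (real (Suc k) * (real q ^ Suc k - 1))" for k
  have sumf: "f sums (\<Sum>i<r. - ln (1 - y i))" unfolding f_def by (rule sums_sum) (rule tsums)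
  have fg: "f k < g k" for k
  proof -
    define z where "z = 1 / real q ^ Suc k"
    have gt1: "real q ^ Suc k > 1" using qpow[of k] by (smt (verit) one_le_power)
    then have z01: "0 < z" "z < 1" unfolding z_def by auto
    have yz: "y i ^ Suc k = z ^ Suc i" for i
    proof -
      have "(real q ^ Suc i) ^ Suc k = (real q ^ Suc k) ^ Suc i"
        by (simp only: power_mult[symmetric] mult.commute)
      then show ?thesis unfolding y_def z_def by (simp only: power_one_over)
    qed
    have "f k = (\<Sum>i<r. z ^ Suc i) / real (Suc k)" unfolding f_def t_def yz by (simp add: sum_divide_distrib)
    also have "(\<Sum>i<r. z ^ Suc i) = z * ((z ^ r - 1) / (z - 1))"
      using z01 by (simp add: sum_distrib_left[symmetric] geometric_sum)
    also have "\<dots> < z / (1 - z)"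
    proof -
      have "z * ((z ^ r - 1) / (z - 1)) = z * (1 - z ^ r) / (1 - z)" using z01 by (simp add: field_simps)
      also have "\<dots> < z / (1 - z)" using z01 by (intro divide_strict_right_mono) (auto simp: mult_less_cancel_left1)
      finally show ?thesis .
    qed
    also have "z / (1 - z) = 1 / (real q ^ Suc k - 1)"
      unfolding z_def using gt1 q by (simp add: field_simps)
    finally have "f k < 1 / (real q ^ Suc k - 1) / real (Suc k)" by (simp add: divide_strict_right_mono)
    then show ?thesis unfolding g_def by (simp add: field_simps)
  qed
  have sumg: "summable g"
  proof (rule summable_comparison_test'[OF summable_geometric[of "1/2 :: real"]])
    fix k :: nat
    have a: "real q ^ Suc k - 1 \<ge> 2 ^ k" using qpow[of k] by (smt (verit) one_le_power)
    have bpos: "real q ^ Suc k - 1 > 0" using a by (smt (verit) one_le_power)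
    have "g k = (1 / (real q ^ Suc k - 1)) / real (Suc k)" unfolding g_def by simp
    also have "\<dots> \<le> (1 / (real q ^ Suc k - 1)) / 1" using bpos by (intro divide_left_mono) auto
    finally have "g k \<le> 1 / (real q ^ Suc k - 1)" by simp
    also have "\<dots> \<le> 1 / 2 ^ k" using a bpos by (intro divide_left_mono) (auto intro!: mult_pos_pos)
    finally have "g k \<le> (1/2) ^ k" by (simp add: power_one_over)
    moreover have "g k \<ge> 0" unfolding g_def using a by (smt (verit) divide_nonneg_nonneg of_nat_0_le_iff zero_le_mult_iff zero_le_power)
    ultimately show "norm (g k) \<le> (1/2) ^ k" by simp
  qed auto
  have "suminf f < suminf g"
  proof -
    have "0 < suminf (\<lambda>k. g k - f k)"
      by (rule suminf_pos) (auto intro: summable_diff[OF sumg sums_summable[OF sumf]] simp: fg)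
    also have "suminf (\<lambda>k. g k - f k) = suminf g - suminf f"
      using suminf_diff[OF sumg sums_summable[OF sumf]] by simp
    finally show ?thesis by simp
  qed
  moreover have "suminf f = ln (\<Prod>i<r. real q ^ Suc i / (real q ^ Suc i - 1))"
  proof -
    have "ln (\<Prod>i<r. real q ^ Suc i / (real q ^ Suc i - 1)) = (\<Sum>i<r. ln (real q ^ Suc i / (real q ^ Suc i - 1)))"
    proof (rule ln_prod)
      fix i show "real q ^ Suc i / (real q ^ Suc i - 1) \<noteq> 0" using facpos[of i] by linarith
    qed simp
    also have "\<dots> = (\<Sum>i<r. - ln (1 - y i))" using lnfac by simp
    also have "\<dots> = suminf f" using sums_unique[OF sumf] by simp
    finally show ?thesis by simp
  qed
  ultimately have "ln (\<Prod>i<r. real q ^ Suc i / (real q ^ Suc i - 1)) < suminf g" by simp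
  moreover have Ppos: "0 < (\<Prod>i<r. real q ^ Suc i / (real q ^ Suc i - 1))"
    by (rule prod_pos) (use facpos in blast)
  ultimately have "exp (ln (\<Prod>i<r. real q ^ Suc i / (real q ^ Suc i - 1))) < exp (suminf g)"
    by (simp only: exp_less_cancel_iff)
  then show ?thesis using Ppos unfolding g_def by (simp only: exp_ln)
qed

lemma sigma_G:
  assumes q: "q \<ge> 2" and rn: "r \<le> n" and c: "real (r * (n - r)) \<le> real m - sigma q"
  shows "G q n r < q ^ m"
proof -
  define S where "S = (\<Sum>k. 1 / (real (Suc k) * (real q ^ Suc k - 1)))"
  have lq: "ln (real q) > 0" using q by simp
  have sig: "sigma q * ln (real q) = S" unfolding sigma_def S_def using lq by simp
  have "real (r * (n - r)) * ln (real q) \<le> (real m - sigma q) * ln (real q)"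
    using c lq by (intro mult_right_mono) auto
  then have e1: "real (r * (n - r)) * ln (real q) \<le> real m * ln (real q) - S" using sig by (simp add: algebra_simps)
  have pw: "real q ^ k = exp (real k * ln (real q))" for k using q by (simp add: ln_realpow[symmetric])
  have "real (G q n r) \<le> real q ^ (r * (n - r)) * (\<Prod>i<r. real q ^ Suc i / (real q ^ Suc i - 1))"
    by (rule G_bound[OF q rn])
  also have "\<dots> < real q ^ (r * (n - r)) * exp S"
    unfolding S_def using q by (intro mult_strict_left_mono prod_lt_exp) auto
  also have "\<dots> \<le> exp (real m * ln (real q) - S) * exp S"
    unfolding pw[of "r * (n - r)"] using e1 by (intro mult_right_mono) auto
  also have "\<dots> = real q ^ m" unfolding pw[of m] by (simp add: exp_diff)
  finally show ?thesis by (metis of_nat_less_imp_less of_nat_power)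
qed


lemma sum_fun_apply: "(\<Sum>a\<in>A. f a) x = (\<Sum>a\<in>A. f a x)"
  by (induction A rule: infinite_finite_induct) (auto simp: plus_fun_def zero_fun_def)

definition ev_vec :: "nat \<Rightarrow> nat \<Rightarrow> 'a::field" where
  "ev_vec j = (\<lambda>i. if i = j then 1 else 0)"

definition vsc :: "'a::field \<Rightarrow> (nat \<Rightarrow> 'a) \<Rightarrow> (nat \<Rightarrow> 'a)" where
  "vsc a v = (\<lambda>j. a * v j)"

interpretation vs: vector_space "vsc :: 'a::field \<Rightarrow> (nat \<Rightarrow> 'a) \<Rightarrow> (nat \<Rightarrow> 'a)"
  by unfold_locales (auto simp: fun_eq_iff algebra_simps plus_fun_def vsc_def)

lemma vsc_sum: "(\<Sum>v\<in>S. vsc (u v) v) = (\<lambda>j. \<Sum>v\<in>S. u v * v j)"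
  by (rule ext) (simp add: sum_fun_apply vsc_def)

lemma ev_vec_inj: "inj (ev_vec :: nat \<Rightarrow> nat \<Rightarrow> 'a::field)"
proof (rule injI)
  fix i j assume "(ev_vec i :: nat \<Rightarrow> 'a) = ev_vec j"
  then have "(ev_vec i :: nat \<Rightarrow> 'a) i = ev_vec j i" by simp
  then show "i = j" unfolding ev_vec_def by (cases "i = j") auto
qed

lemma vecs_in_span: "x \<in> vecs n \<Longrightarrow> x \<in> vs.span (ev_vec ` {..<n})"
proof -
  assume x: "x \<in> vecs n"
  have "x = (\<Sum>j<n. vsc (x j) (ev_vec j))"
  proof (rule ext)
    fix i
    have "(\<Sum>j<n. vsc (x j) (ev_vec j)) i = (\<Sum>j<n. x j * (if i = j then 1 else 0))"
      by (simp add: sum_fun_apply vsc_def ev_vec_def)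
    also have "\<dots> = (\<Sum>j<n. if j = i then x j else 0)" by (rule sum.cong) auto
    also have "\<dots> = (if i < n then x i else 0)" by (simp add: sum.delta)
    also have "\<dots> = x i" using x unfolding vecs_def by auto
    finally show "x i = (\<Sum>j<n. vsc (x j) (ev_vec j)) i" by simp
  qed
  also have "\<dots> \<in> vs.span (ev_vec ` {..<n})"
    by (intro vs.span_sum vs.span_scale vs.span_base) auto
  finally show ?thesis .
qed

lemma indep_vs: assumes "finite B" "vec_indep UNIV B" shows "vs.independent B"
proof (rule vs.independent_if_scalars_zero[OF assms(1)])
  fix f x assume s: "(\<Sum>x\<in>B. vsc (f x) x) = 0" and xB: "x \<in> B"
  have "\<forall>j. (\<Sum>b\<in>B. f b * b j) = 0"
  proof
    fix j show "(\<Sum>b\<in>B. f b * b j) = 0" using fun_cong[OF s, of j] by (simp add: vsc_sum)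
  qed
  then show "f x = 0" using assms(2)[unfolded vec_indep_def, rule_format, of f] xB by blast
qed

lemma redundancy:
  fixes B :: "(nat \<Rightarrow> 'a::field) set"
  assumes finB: "finite B" and Bv: "B \<subseteq> vecs n" and indB: "vec_indep UNIV B" and x: "x \<in> vecs n"
  shows "\<exists>c T. c \<in> vec_span B \<and> T \<subseteq> {..<n} \<and> card T + card B \<le> n \<and> (\<forall>j<n. j \<notin> T \<longrightarrow> x j - c j = 0)"
proof -
  define E where "E = (ev_vec ` {..<n} :: (nat \<Rightarrow> 'a) set)"
  have finE: "finite E" unfolding E_def by simp
  have cardE: "card E = n" unfolding E_def using card_image[OF inj_on_subset[OF ev_vec_inj subset_UNIV], of "{..<n}"] by simp
  have iB: "vs.independent B" by (rule indep_vs[OF finB indB])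
  obtain B' where B': "B \<subseteq> B'" "B' \<subseteq> B \<union> E" "vs.independent B'" "B \<union> E \<subseteq> vs.span B'"
    using vs.maximal_independent_subset_extend[of B "B \<union> E", OF _ iB] by blast
  have finB': "finite B'" using B'(2) finB finE by (meson finite_UnI finite_subset)
  have "B' \<subseteq> vs.span E" using B'(2) Bv vecs_in_span unfolding E_def
    by (auto intro: vs.span_base)
  then have cB': "card B' \<le> n" using vs.independent_span_bound[OF finE B'(3)] cardE by simp
  have "x \<in> vs.span E" using vecs_in_span[OF x] unfolding E_def .
  also have "vs.span E \<subseteq> vs.span B'"
    using B'(4) by (metis le_sup_iff vs.span_mono vs.span_span)
  finally have "x \<in> vs.span B'" .
  then obtain u where u: "x = (\<Sum>v\<in>B'. vsc (u v) v)" unfolding vs.span_finite[OF finB'] by blast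
  define c where "c = (\<lambda>j. \<Sum>v\<in>B. u v * v j)"
  have cspan: "c \<in> vec_span B" unfolding vec_span_def c_def by blast
  define T where "T = {j. j < n \<and> ev_vec j \<in> B' - B}"
  have TE: "ev_vec ` T = B' - B"
  proof
    show "ev_vec ` T \<subseteq> B' - B" unfolding T_def by auto
    show "B' - B \<subseteq> ev_vec ` T"
    proof
      fix v assume v: "v \<in> B' - B"
      then have "v \<in> E" using B'(2) by auto
      then obtain j where "j < n" "v = ev_vec j" unfolding E_def by auto
      then show "v \<in> ev_vec ` T" unfolding T_def using v by auto
    qed
  qed
  have "card T = card (B' - B)" unfolding TE[symmetric] using card_image[OF inj_on_subset[OF ev_vec_inj[where 'a='a] subset_UNIV], of T] by simp
  also have "\<dots> = card B' - card B" using B'(1) finB by (simp add: card_Diff_subset)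
  finally have cT: "card T + card B \<le> n" using cB' B'(1) finB' card_mono[OF finB' B'(1)] by linarith
  have xc: "x j - c j = (\<Sum>v\<in>B' - B. u v * v j)" for j
  proof -
    have "x j = (\<Sum>v\<in>B'. u v * v j)" unfolding u by (simp add: vsc_sum)
    also have "\<dots> = (\<Sum>v\<in>B' - B. u v * v j) + (\<Sum>v\<in>B. u v * v j)"
      using B'(1) finB' by (metis (no_types, lifting) sum.subset_diff)
    finally show ?thesis unfolding c_def by simp
  qed
  have zero: "x j - c j = 0" if "j < n" "j \<notin> T" for j
  proof -
    have "(\<Sum>v\<in>B' - B. u v * v j) = 0"
    proof (rule sum.neutral, rule ballI)
      fix v assume "v \<in> B' - B"
      then obtain t where t: "t \<in> T" "v = ev_vec t" using TE by blast
      then have "t \<noteq> j" using that by auto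
      then show "u v * v j = 0" unfolding t(2) ev_vec_def by simp
    qed
    then show ?thesis using xc by simp
  qed
  have "T \<subseteq> {..<n}" unfolding T_def by auto
  then show ?thesis using cspan cT zero by blast
qed


lemma vec_span_image: "vec_span B = (\<lambda>c. \<lambda>j. \<Sum>b\<in>B. c b * b j) ` (B \<rightarrow>\<^sub>E UNIV)"
proof
  show "vec_span B \<subseteq> (\<lambda>c. \<lambda>j. \<Sum>b\<in>B. c b * b j) ` (B \<rightarrow>\<^sub>E UNIV)"
  proof
    fix x assume "x \<in> vec_span B"
    then obtain c where c: "x = (\<lambda>j. \<Sum>b\<in>B. c b * b j)" unfolding vec_span_def by blast
    have "x = (\<lambda>j. \<Sum>b\<in>B. restrict c B b * b j)" unfolding c by simp
    moreover have "restrict c B \<in> B \<rightarrow>\<^sub>E UNIV" by simp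
    ultimately show "x \<in> (\<lambda>c. \<lambda>j. \<Sum>b\<in>B. c b * b j) ` (B \<rightarrow>\<^sub>E UNIV)" by blast
  qed
qed (auto simp: vec_span_def)

lemma code_basics:
  fixes C :: "(nat \<Rightarrow> 'a::{field,finite}) set"
  assumes "linear_code n k C"
  shows "C \<subseteq> vecs n" "0 \<in> C" "(\<lambda>_. 0) \<in> C" "finite C" "card C \<le> card (UNIV :: 'a set) ^ k"
proof -
  obtain B where B: "finite B" "card B = k" "B \<subseteq> vecs n" "vec_indep UNIV B" "C = vec_span B"
    using assms unfolding linear_code_def by blast
  show sub: "C \<subseteq> vecs n"
  proof
    fix x assume "x \<in> C"
    then obtain c where c: "x = (\<lambda>j. \<Sum>b\<in>B. c b * b j)" using B unfolding vec_span_def by blast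
    show "x \<in> vecs n" unfolding vecs_def
    proof (intro CollectI allI impI)
      fix i assume "n \<le> i"
      then have "\<forall>b\<in>B. b i = 0" using B(3) unfolding vecs_def by auto
      then show "x i = 0" unfolding c by (simp add: sum.neutral)
    qed
  qed
  show z: "(\<lambda>_. 0) \<in> C" unfolding B(5) vec_span_def by (rule CollectI, rule exI[of _ "\<lambda>_. 0"]) simp
  then show "0 \<in> C" by (simp add: zero_fun_def)
  show "finite C" using sub finite_vecs finite_subset by blast
  have "card C \<le> card (B \<rightarrow>\<^sub>E (UNIV :: 'a set))" unfolding B(5) vec_span_image
    by (rule card_image_le) (simp add: B(1) finite_PiE)
  also have "\<dots> = card (UNIV :: 'a set) ^ k" using B(1,2) by (simp add: card_PiE)
  finally show "card C \<le> card (UNIV :: 'a set) ^ k" .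
qed

lemma card_vec_span_indep:
  fixes B :: "(nat \<Rightarrow> 'a::{field,finite}) set"
  assumes "finite B" "vec_indep UNIV B"
  shows "card (vec_span B) = card (UNIV :: 'a set) ^ card B"
proof -
  have "inj_on (\<lambda>c. \<lambda>j. \<Sum>b\<in>B. c b * b j) (B \<rightarrow>\<^sub>E (UNIV :: 'a set))"
  proof (rule inj_onI)
    fix c d assume c: "c \<in> B \<rightarrow>\<^sub>E (UNIV :: 'a set)" and d: "d \<in> B \<rightarrow>\<^sub>E (UNIV :: 'a set)"
      and eq: "(\<lambda>j. \<Sum>b\<in>B. c b * b j) = (\<lambda>j. \<Sum>b\<in>B. d b * b j)"
    have "\<forall>j. (\<Sum>b\<in>B. (c b - d b) * b j) = 0"
    proof
      fix j have "(\<Sum>b\<in>B. c b * b j) = (\<Sum>b\<in>B. d b * b j)" using fun_cong[OF eq, of j] by simp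
      then show "(\<Sum>b\<in>B. (c b - d b) * b j) = 0" by (simp add: algebra_simps sum_subtractf)
    qed
    then have "\<forall>b\<in>B. c b - d b = 0" using assms(2)[unfolded vec_indep_def, rule_format, of "\<lambda>b. c b - d b"] by simp
    then show "c = d" using c d by (intro PiE_ext) auto
  qed
  then have "card (vec_span B) = card (B \<rightarrow>\<^sub>E (UNIV :: 'a set))" unfolding vec_span_image by (rule card_image)
  also have "\<dots> = card (UNIV :: 'a set) ^ card B" using assms(1) by (simp add: card_PiE)
  finally show ?thesis .
qed

lemma cr_upper:
  fixes C :: "(nat \<Rightarrow> 'a::{field,finite}) set"
  assumes fin: "finite C" and ne: "C \<noteq> {}"
    and h: "\<And>x. x \<in> vecs n \<Longrightarrow> \<exists>c\<in>C. rank_dist F n x c \<le> t"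
  shows "rank_covering_radius F n C \<le> t"
  unfolding rank_covering_radius_def
proof (rule Max.boundedI)
  show "finite ((\<lambda>x. Min ((\<lambda>c. rank_dist F n x c) ` C)) ` vecs n)" by (intro finite_imageI finite_vecs)
  have "(\<lambda>_. 0) \<in> vecs n" unfolding vecs_def by simp
  then have "vecs n \<noteq> {}" by blast
  then show "(\<lambda>x. Min ((\<lambda>c. rank_dist F n x c) ` C)) ` vecs n \<noteq> {}" by simp
  fix a assume "a \<in> (\<lambda>x. Min ((\<lambda>c. rank_dist F n x c) ` C)) ` vecs n"
  then obtain x where x: "x \<in> vecs n" "a = Min ((\<lambda>c. rank_dist F n x c) ` C)" by blast
  obtain c where c: "c \<in> C" "rank_dist F n x c \<le> t" using h[OF x(1)] by blast
  have "a \<le> rank_dist F n x c" unfolding x(2) using fin c(1) by (intro Min_le) auto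
  then show "a \<le> t" using c(2) by simp
qed

lemma cr_attain:
  fixes C :: "(nat \<Rightarrow> 'a::{field,finite}) set"
  assumes fin: "finite C" and ne: "C \<noteq> {}" and x: "x \<in> vecs n"
  shows "\<exists>c\<in>C. rank_dist F n x c \<le> rank_covering_radius F n C"
proof -
  have "Min ((\<lambda>c. rank_dist F n x c) ` C) \<in> (\<lambda>c. rank_dist F n x c) ` C"
    using fin ne by (intro Min_in) auto
  then obtain c where c: "c \<in> C" "Min ((\<lambda>c. rank_dist F n x c) ` C) = rank_dist F n x c" by auto
  have "Min ((\<lambda>c. rank_dist F n x c) ` C) \<le> rank_covering_radius F n C"
    unfolding rank_covering_radius_def using x finite_vecs by (intro Max_ge) auto
  then show ?thesis using c by auto
qed

lemma cr_lower:
  fixes C :: "(nat \<Rightarrow> 'a::{field,finite}) set"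
  assumes fin: "finite C" and ne: "C \<noteq> {}" and x: "x \<in> vecs n"
    and h: "\<And>c. c \<in> C \<Longrightarrow> t \<le> rank_dist F n x c"
  shows "t \<le> rank_covering_radius F n C"
proof -
  obtain c where c: "c \<in> C" "rank_dist F n x c \<le> rank_covering_radius F n C"
    using cr_attain[OF fin ne x] by blast
  then show ?thesis using h[OF c(1)] by simp
qed


context ffset
begin

lemma code_upper:
  assumes C: "linear_code n k C"
  shows "k \<le> n" "rank_covering_radius F n C \<le> n - k"
proof -
  obtain B where B: "finite B" "card B = k" "B \<subseteq> vecs n" "vec_indep UNIV B" "C = vec_span B"
    using C unfolding linear_code_def by blast
  have "(\<lambda>_. 0) \<in> vecs n" unfolding vecs_def by simp
  then obtain c0 T0 where "c0 \<in> vec_span B" "T0 \<subseteq> {..<n}" "card T0 + card B \<le> n"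
    using redundancy[OF B(1,3,4)] by blast
  then show "k \<le> n" using B(2) by simp
  have fin: "finite C" and ne: "C \<noteq> {}" using code_basics[OF C] by auto
  show "rank_covering_radius F n C \<le> n - k"
  proof (rule cr_upper[OF fin ne])
    fix x :: "nat \<Rightarrow> 'a" assume x: "x \<in> vecs n"
    obtain c T where cT: "c \<in> vec_span B" "T \<subseteq> {..<n}" "card T + card B \<le> n" "\<forall>j<n. j \<notin> T \<longrightarrow> x j - c j = 0"
      using redundancy[OF B(1,3,4) x] by blast
    have "rank_dist F n x c \<le> card T" unfolding rank_dist_def
      by (rule rk_support[OF cT(2)]) (use cT(4) in blast)
    then show "\<exists>c\<in>C. rank_dist F n x c \<le> n - k" using cT B by (intro bexI[of _ c]) auto
  qed
qed

lemma cr_le_n: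
  assumes C: "linear_code n k C"
  shows "rank_covering_radius F n C \<le> n"
  using code_upper[OF C] by simp

lemma count_lower:
  assumes C: "linear_code n k C" and rho: "\<rho> = rank_covering_radius F n C" and G: "G q n \<rho> < q ^ m"
  shows "n \<le> k + \<rho>"
proof (rule ccontr)
  assume "\<not> n \<le> k + \<rho>"
  then have lt: "k + \<rho> + 1 \<le> n" by simp
  have fin: "finite C" and ne: "C \<noteq> {}" and sub: "C \<subseteq> vecs n" and cC: "card C \<le> card (UNIV :: 'a set) ^ k"
    using code_basics[OF C] by auto
  have rn: "\<rho> \<le> n" using cr_le_n[OF C] rho by simp
  have cover: "vecs n \<subseteq> (\<lambda>(c, z). \<lambda>j. c j + z j) ` (C \<times> RBall F n \<rho>)"
  proof
    fix x :: "nat \<Rightarrow> 'a" assume x: "x \<in> vecs n"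
    obtain c where c: "c \<in> C" "rank_dist F n x c \<le> \<rho>" using cr_attain[OF fin ne x] rho by blast
    define z where "z = (\<lambda>j. x j - c j)"
    have "z \<in> vecs n" using x c(1) sub unfolding z_def vecs_def by auto
    then have "z \<in> RBall F n \<rho>" using c(2) unfolding RBall_def rank_dist_def z_def by simp
    moreover have "x = (\<lambda>j. c j + z j)" unfolding z_def by simp
    ultimately show "x \<in> (\<lambda>(c, z). \<lambda>j. c j + z j) ` (C \<times> RBall F n \<rho>)" using c(1) by force
  qed
  have finB: "finite (RBall F n \<rho>)" unfolding RBall_def by (rule finite_subset[OF _ finite_vecs[of n]]) blast
  have "(q ^ m) ^ n = card (vecs n :: (nat \<Rightarrow> 'a) set)" using card_vecs[where 'a='a, of n] cardU by simp
  also have "\<dots> \<le> card ((\<lambda>(c, z). \<lambda>j. c j + z j) ` (C \<times> RBall F n \<rho>))"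
    by (rule card_mono[OF _ cover]) (use fin finB in simp)
  also have "\<dots> \<le> card (C \<times> RBall F n \<rho>)" by (rule card_image_le) (use fin finB in simp)
  also have "\<dots> = card C * card (RBall F n \<rho>)" by (simp add: card_cartesian_product)
  also have "\<dots> \<le> (q ^ m) ^ k * ((q ^ m) ^ \<rho> * G q n \<rho>)"
    using cC cardU ball_bound[OF rn] by (intro mult_mono) auto
  also have "\<dots> < (q ^ m) ^ k * ((q ^ m) ^ \<rho> * q ^ m)"
    using G q_pos by (intro mult_strict_left_mono) auto
  also have "\<dots> = (q ^ m) ^ (k + \<rho> + 1)" by (simp add: power_add)
  also have "\<dots> \<le> (q ^ m) ^ n" using lt q_ge2 m_ge1 by (intro power_increasing) (auto simp: one_le_power)
  finally show False by simp
qed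

lemma indep_card_le:
  assumes ind: "coords_indep F y I" and finI: "finite I" and V: "ksub F V" and yV: "\<And>i. i \<in> I \<Longrightarrow> y i \<in> V"
  shows "q ^ card I \<le> card V"
proof -
  have "card (spanK F I y) = card F ^ card I" by (rule card_span_indep[OF sf _ finI ind]) simp
  moreover have "card (spanK F I y) \<le> card V" by (rule card_mono[OF _ span_sub[OF V yV]]) simp_all
  ultimately show ?thesis using cardF by simp
qed

lemma exists_indep: assumes "n \<le> m" shows "\<exists>h. coords_indep F h {..<n}"
proof -
  have V: "ksub F (UNIV :: 'a set)" unfolding ksub_def by simp
  obtain d y where y: "coords_indep F y {..<d}" "spanK F {..<d} y = UNIV"
    using ksub_finite_basis[OF sf _ V] by fastforce
  have "card (spanK F {..<d} y) = card F ^ card {..<d}" by (rule card_span_indep[OF sf _ _ y(1)]) simp_all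
  then have "q ^ d = q ^ m" using y(2) cardU cardF by simp
  then have "d = m" using q_ge2 by (simp add: power_inject_exp)
  then have "coords_indep F y {..<n}" using indep_subset[OF y(1) _ _ sf] assms by simp
  then show ?thesis by blast
qed

lemma ksub_plus:
  assumes V1: "ksub F V1" and V2: "ksub F V2"
  shows "ksub F ((\<lambda>(a, b). a + b) ` (V1 \<times> V2))"
  unfolding ksub_def
proof (intro conjI ballI)
  show "0 \<in> (\<lambda>(a, b). a + b) ` (V1 \<times> V2)"
    using V1 V2 unfolding ksub_def by (intro image_eqI[of _ _ "(0, 0)"]) auto
next
  fix x y assume "x \<in> (\<lambda>(a, b). a + b) ` (V1 \<times> V2)" "y \<in> (\<lambda>(a, b). a + b) ` (V1 \<times> V2)"
  then obtain a1 b1 a2 b2 where ab: "a1 \<in> V1" "b1 \<in> V2" "x = a1 + b1" "a2 \<in> V1" "b2 \<in> V2" "y = a2 + b2" by auto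
  have "x + y = (a1 + a2) + (b1 + b2)" using ab by (simp add: algebra_simps)
  moreover have "a1 + a2 \<in> V1" "b1 + b2 \<in> V2" using ab V1 V2 unfolding ksub_def by auto
  ultimately show "x + y \<in> (\<lambda>(a, b). a + b) ` (V1 \<times> V2)" by (intro image_eqI[of _ _ "(a1 + a2, b1 + b2)"]) auto
next
  fix c x assume c: "c \<in> F" and "x \<in> (\<lambda>(a, b). a + b) ` (V1 \<times> V2)"
  then obtain a1 b1 where ab: "a1 \<in> V1" "b1 \<in> V2" "x = a1 + b1" by auto
  have "c * x = c * a1 + c * b1" using ab by (simp add: algebra_simps)
  moreover have "c * a1 \<in> V1" "c * b1 \<in> V2" using ab V1 V2 c unfolding ksub_def by auto
  ultimately show "c * x \<in> (\<lambda>(a, b). a + b) ` (V1 \<times> V2)" by (intro image_eqI[of _ _ "(c * a1, c * b1)"]) auto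
qed

lemma elem_lower:
  assumes C: "linear_code n k C" and El: "elementary_subspace F n C" and nm: "n \<le> m"
  shows "n - k \<le> rank_covering_radius F n C"
proof -
  obtain Be where Be: "finite Be" "Be \<subseteq> vecs n" "\<forall>b\<in>Be. \<forall>j. b j \<in> F" "vec_indep UNIV Be" "C = vec_span Be"
    using El unfolding elementary_subspace_def by blast
  have fin: "finite C" and ne: "C \<noteq> {}" and cC: "card C \<le> card (UNIV :: 'a set) ^ k"
    using code_basics[OF C] by auto
  have "card (UNIV :: 'a set) ^ card Be \<le> card (UNIV :: 'a set) ^ k"
    using cC card_vec_span_indep[OF Be(1,4)] Be(5) by simp
  moreover have "card (UNIV :: 'a set) > 1" using cardU q_ge2 m_ge1
    by (metis Suc_1 Suc_le_lessD le_trans one_le_power power_one_right power_increasing q_pos less_imp_le_nat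
         less_le_trans)
  ultimately have cBe: "card Be \<le> k" using power_le_imp_le_exp by blast
  obtain h where h: "coords_indep F h {..<n}" using exists_indep[OF nm] by blast
  define x0 where "x0 = (\<lambda>j. if j < n then h j else 0)"
  have x0v: "x0 \<in> vecs n" unfolding x0_def vecs_def by simp
  show ?thesis
  proof (rule cr_lower[OF fin ne x0v])
    fix c assume "c \<in> C"
    then obtain \<alpha> where c: "c = (\<lambda>j. \<Sum>b\<in>Be. \<alpha> b * b j)" using Be(5) unfolding vec_span_def by blast
    define z where "z = (\<lambda>j. x0 j - c j)"
    obtain S where S: "S \<subseteq> {..<n}" "coords_indep F z S" "card S = rk F n z" using rk_attain by blast
    have finS: "finite S" using S(1) finite_subset by blast
    define V1 where "V1 = spanK F S z"
    define V2 where "V2 = spanK F Be \<alpha>"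
    define V where "V = (\<lambda>(a, b). a + b) ` (V1 \<times> V2)"
    have kV: "ksub F V" unfolding V_def V1_def V2_def by (intro ksub_plus ksub_span sf)
    have hV: "h j \<in> V" if j: "j \<in> {..<n}" for j
    proof -
      have "z j \<in> V1" unfolding V1_def using rk_max_span[OF S] j by simp
      moreover have "c j \<in> V2"
      proof -
        have "c j = (\<Sum>b\<in>Be. b j * \<alpha> b)" unfolding c by (simp add: mult.commute)
        moreover have "\<forall>b\<in>Be. b j \<in> F" using Be(3) by blast
        ultimately show ?thesis unfolding V2_def spanK_def by (intro CollectI exI[of _ "\<lambda>b. b j"]) simp
      qed
      moreover have "h j = z j + c j" using j unfolding z_def x0_def by simp
      ultimately show ?thesis unfolding V_def by (intro image_eqI[of _ _ "(z j, c j)"]) auto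
    qed
    have "q ^ n \<le> card V" using indep_card_le[OF h _ kV hV] by simp
    also have "card V \<le> card (V1 \<times> V2)" unfolding V_def by (rule card_image_le) simp
    also have "\<dots> = card V1 * card V2" by (simp add: card_cartesian_product)
    also have "\<dots> \<le> q ^ card S * q ^ card Be"
      unfolding V1_def V2_def using card_span_le[of F S z] card_span_le[of F Be \<alpha>] finS Be(1) cardF
      by (intro mult_mono) auto
    also have "\<dots> = q ^ (card S + card Be)" by (simp add: power_add)
    finally have "n \<le> card S + card Be" using q_ge2 by (simp add: power_le_imp_le_exp)
    then show "n - k \<le> rank_dist F n x0 c" unfolding rank_dist_def using S(3) cBe z_def by simp
  qed
qed

end

context gab
begin

lemma ev_diff: "ev t w (x - y) = ev t w x - ev t w y"
  unfolding ev_def by (simp add: sg_diff algebra_simps sum_subtractf)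

lemma ev_lin_comb:
  assumes "\<And>j. j \<in> I \<Longrightarrow> c j \<in> F"
  shows "ev t w (\<Sum>j\<in>I. c j * y j) = (\<Sum>j\<in>I. c j * ev t w (y j))"
proof -
  have "ev t w (\<Sum>j\<in>I. c j * y j) = (\<Sum>i\<le>t. w i * (\<Sum>j\<in>I. c j * sg i (y j)))"
    unfolding ev_def using assms by (simp add: sg_sum sg_mult sg_F)
  also have "\<dots> = (\<Sum>i\<le>t. \<Sum>j\<in>I. c j * (w i * sg i (y j)))"
    by (simp add: sum_distrib_left algebra_simps)
  also have "\<dots> = (\<Sum>j\<in>I. \<Sum>i\<le>t. c j * (w i * sg i (y j)))" by (rule sum.swap)
  also have "\<dots> = (\<Sum>j\<in>I. c j * ev t w (y j))" unfolding ev_def by (simp add: sum_distrib_left)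
  finally show ?thesis .
qed

lemma gab_rank:
  assumes g: "coords_indep F g {..<n}" and w: "\<exists>i\<le>t. w i \<noteq> 0"
  shows "n \<le> rk F n (\<lambda>j. ev t w (g j)) + t"
proof -
  define wv where "wv j = ev t w (g j)" for j
  obtain S where S: "S \<subseteq> {..<n}" "coords_indep F wv S" "card S = rk F n wv" using rk_attain by blast
  have finS: "finite S" using S(1) finite_subset by blast
  define W where "W = spanK F {..<n} g"
  have cW: "card W = q ^ n" unfolding W_def using card_span_indep[OF sf _ _ g] cardF by simp
  have img: "ev t w ` W \<subseteq> spanK F S wv"
  proof
    fix v assume "v \<in> ev t w ` W"
    then obtain c where c: "v = ev t w (\<Sum>j<n. c j * g j)" "\<forall>j<n. c j \<in> F"
      unfolding W_def spanK_def by auto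
    have "v = (\<Sum>j<n. c j * wv j)" unfolding c(1) wv_def by (rule ev_lin_comb) (use c(2) in auto)
    then have "v \<in> spanK F {..<n} wv" unfolding spanK_def using c(2) by blast
    also have "spanK F {..<n} wv \<subseteq> spanK F S wv"
      by (rule span_sub[OF ksub_span[OF sf]]) (use rk_max_span[OF S] in auto)
    finally show "v \<in> spanK F S wv" .
  qed
  have cimg: "card (ev t w ` W) \<le> q ^ card S"
  proof -
    have "card (ev t w ` W) \<le> card (spanK F S wv)" by (rule card_mono[OF _ img]) simp
    also have "\<dots> \<le> card F ^ card S" by (rule card_span_le[OF _ finS]) simp
    finally show ?thesis using cardF by simp
  qed
  have "q ^ n \<le> card {y. ev t w y \<in> ev t w ` W}" unfolding cW[symmetric] by (rule card_mono) auto
  also have "\<dots> \<le> card (ev t w ` W) * card {y. ev t w y = 0}"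
    by (rule fiber_card) (simp_all add: ev_diff)
  also have "\<dots> \<le> q ^ card S * q ^ t" using cimg kernel_bound[OF w] by (intro mult_mono) auto
  also have "\<dots> = q ^ (card S + t)" by (simp add: power_add)
  finally have "n \<le> card S + t" using q_ge2 by (simp add: power_le_imp_le_exp)
  then show ?thesis using S(3) unfolding wv_def by simp
qed

lemma rk_zero_vec: "rk F n (\<lambda>_. 0) = 0"
  using rk_support[of "{}" n "\<lambda>_. 0"] by simp

lemma gab_main:
  assumes C: "linear_code n k C" and kn: "k' \<le> n" and g: "coords_indep F g {..<n}"
    and Ceq: "C = {x. \<exists>u. x = (\<lambda>j. if j < n then (\<Sum>i<k'. u i * sg i (g j)) else 0)}"
  shows "n - k \<le> rank_covering_radius F n C"
proof -
  have fin: "finite C" and ne: "C \<noteq> {}" and cC: "card C \<le> card (UNIV :: 'a set) ^ k"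
    using code_basics[OF C] by auto
  define cw where "cw u = (\<lambda>j. if j < n then (\<Sum>i<k'. u i * sg i (g j)) else 0)" for u
  have inj: "inj_on cw ({..<k'} \<rightarrow>\<^sub>E (UNIV :: 'a set))"
  proof (rule inj_onI, rule ccontr)
    fix u u' assume u: "u \<in> {..<k'} \<rightarrow>\<^sub>E (UNIV :: 'a set)" and u': "u' \<in> {..<k'} \<rightarrow>\<^sub>E (UNIV :: 'a set)"
      and eq: "cw u = cw u'" and ne: "u \<noteq> u'"
    obtain i0 where i0: "i0 < k'" "u i0 \<noteq> u' i0"
      using ne u u' by (metis PiE_ext lessThan_iff)
    define t where "t = k' - 1"
    have kt: "{..<k'} = {..t}" unfolding t_def using i0 by auto
    define d where "d i = u i - u' i" for i
    have dnz: "\<exists>i\<le>t. d i \<noteq> 0" using i0 kt unfolding d_def by auto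
    have zero: "ev t d (g j) = 0" if j: "j < n" for j
    proof -
      have "(\<Sum>i<k'. u i * sg i (g j)) = (\<Sum>i<k'. u' i * sg i (g j))"
        using fun_cong[OF eq, of j] j unfolding cw_def by simp
      then show ?thesis unfolding ev_def d_def kt[symmetric]
        by (simp add: algebra_simps sum_subtractf)
    qed
    have "rk F n (\<lambda>j. ev t d (g j)) = rk F n (\<lambda>_. 0)" by (rule rk_cong) (simp add: zero)
    then have "n \<le> t" using gab_rank[OF g dnz] rk_zero_vec by simp
    then show False using kn i0 unfolding t_def by simp
  qed
  have "cw ` ({..<k'} \<rightarrow>\<^sub>E (UNIV :: 'a set)) \<subseteq> C" unfolding Ceq cw_def by blast
  then have "card (cw ` ({..<k'} \<rightarrow>\<^sub>E (UNIV :: 'a set))) \<le> card C" by (rule card_mono[OF fin])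
  then have "card (UNIV :: 'a set) ^ k' \<le> card (UNIV :: 'a set) ^ k"
    using card_image[OF inj] cC by (simp add: card_PiE)
  moreover have "card (UNIV :: 'a set) > 1" using cardU q_ge2 m_ge1
    by (metis Suc_1 Suc_le_lessD le_trans one_le_power power_one_right power_increasing q_pos less_imp_le_nat
         less_le_trans)
  ultimately have kk: "k' \<le> k" using power_le_imp_le_exp by blast
  show ?thesis
  proof (cases "k' = n")
    case True then show ?thesis using kk by simp
  next
    case False
    define x0 where "x0 = (\<lambda>j. if j < n then sg k' (g j) else 0)"
    have x0v: "x0 \<in> vecs n" unfolding x0_def vecs_def by simp
    have "n - k' \<le> rank_covering_radius F n C"
    proof (rule cr_lower[OF fin ne x0v])
      fix c assume "c \<in> C"
      then obtain u where c: "c = cw u" unfolding Ceq cw_def by blast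
      define w where "w i = (if i = k' then 1 else - u i)" for i
      have wnz: "\<exists>i\<le>k'. w i \<noteq> 0" unfolding w_def by (intro exI[of _ k']) simp
      have eqv: "x0 j - c j = ev k' w (g j)" if j: "j < n" for j
      proof -
        have "ev k' w (g j) = (\<Sum>i<k'. w i * sg i (g j)) + w k' * sg k' (g j)"
          unfolding ev_def by (simp add: lessThan_Suc_atMost[symmetric])
        also have "(\<Sum>i<k'. w i * sg i (g j)) = - (\<Sum>i<k'. u i * sg i (g j))"
          unfolding w_def by (simp add: sum_negf[symmetric])
        finally show ?thesis unfolding x0_def c cw_def w_def using j by simp
      qed
      have "rank_dist F n x0 c = rk F n (\<lambda>j. ev k' w (g j))" unfolding rank_dist_def
        by (rule rk_cong) (simp add: eqv)
      then show "n - k' \<le> rank_dist F n x0 c" using gab_rank[OF g wnz] by simp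
    qed
    then show ?thesis using kk by simp
  qed
qed

end


theorem proposition14:
  fixes F :: "'a::{field,finite} set" and q m n k \<rho> :: nat and C :: "(nat \<Rightarrow> 'a) set"
  assumes "subfield F"
    and "card F = q"
    and "card (UNIV :: 'a set) = q ^ m"
    and "n \<le> m"
    and "linear_code n k C"
    and "\<rho> = rank_covering_radius F n C"
    and "\<rho> \<in> {0, 1, n - 1, n}
         \<or> real (\<rho> * (n - \<rho>)) \<le> real m - sigma q
         \<or> gen_gabidulin F q m n C
         \<or> elementary_subspace F n C"
  shows "k = n - \<rho>"
proof -
  interpret ffset F q m using assms(1-3) by unfold_locales
  have C: "linear_code n k C" by fact
  have rho: "\<rho> = rank_covering_radius F n C" by fact
  have kn: "k \<le> n" using code_upper[OF C] by simp
  have up: "\<rho> \<le> n - k" using code_upper[OF C] rho by simp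
  have rn: "\<rho> \<le> n" using cr_le_n[OF C] rho by simp
  have qm: "q ^ n \<le> q ^ m" using assms(4) q_ge2 by (intro power_increasing) auto
  have low: "n \<le> k + \<rho>"
    using assms(7)
  proof (elim disjE)
    assume r: "\<rho> \<in> {0, 1, n - 1, n}"
    show ?thesis
    proof (cases "\<rho> = n")
      case True then show ?thesis by simp
    next
      case False
      have "G q n \<rho> < q ^ m"
      proof -
        have "\<rho> = 0 \<or> \<rho> = 1 \<or> \<rho> = n - 1" using r False by auto
        then show ?thesis
        proof (elim disjE)
          assume "\<rho> = 0"
          moreover have "1 < q ^ m" using q_ge2 m_ge1
            by (metis less_le_trans nat_less_le numeral_le_one_iff one_le_power power_increasing power_one_right
                semiring_norm(69) Suc_1 Suc_le_lessD)
          ultimately show ?thesis by simp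
        next
          assume "\<rho> = 1"
          then show ?thesis using G1[OF q_ge2, of n] qm by simp
        next
          assume r1: "\<rho> = n - 1"
          show ?thesis
          proof (cases n)
            case 0 then show ?thesis using r1 False by simp
          next
            case (Suc n')
            then show ?thesis using Gsub[OF q_ge2, of n'] qm r1 by simp
          qed
        qed
      qed
      then show ?thesis by (rule count_lower[OF C rho])
    qed
  next
    assume "real (\<rho> * (n - \<rho>)) \<le> real m - sigma q"
    then have "G q n \<rho> < q ^ m" by (rule sigma_G[OF q_ge2 rn])
    then show ?thesis by (rule count_lower[OF C rho])
  next
    assume "gen_gabidulin F q m n C"
    then obtain k' g a where kg: "k' \<le> n" "coords_indep F g {..<n}" "coprime a (int m)"
      and Ceq: "C = {x. \<exists>u. x = (\<lambda>j. if j < n then (\<Sum>i<k'. u i * g j ^ (q ^ nat ((a * int i) mod int m))) else 0)}"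
      unfolding gen_gabidulin_def by blast
    have mpos: "int m > 0" using m_ge1 by simp
    define e where "e = nat (a mod int m)"
    have ie: "int e = a mod int m" unfolding e_def using mpos by simp
    have "coprime (a mod int m) (int m)" using kg(3) mpos by simp
    then have cop: "coprime e m" using ie by (metis coprime_int_iff)
    interpret gab F q m e using cop by unfold_locales
    have expo: "g j ^ (q ^ nat ((a * int i) mod int m)) = sg i (g j)" for i j
    proof -
      have "int ((e * i) mod m) = (a * int i) mod int m"
        by (simp add: of_nat_mod ie mod_mult_left_eq)
      then have "nat ((a * int i) mod int m) = (e * i) mod m" by linarith
      then show ?thesis unfolding sg_def using pow_mod[of "g j" "e * i"] by simp
    qed
    have Ceq': "C = {x. \<exists>u. x = (\<lambda>j. if j < n then (\<Sum>i<k'. u i * sg i (g j)) else 0)}"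
      unfolding Ceq expo ..
    have "n - k \<le> rank_covering_radius F n C" by (rule gab_main[OF C kg(1,2) Ceq'])
    then show ?thesis using rho by simp
  next
    assume "elementary_subspace F n C"
    then have "n - k \<le> rank_covering_radius F n C" by (rule elem_lower[OF C _ assms(4)])
    then show ?thesis using rho by simp
  qed
  show ?thesis using kn up low by simp
qed


end
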